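(* Let $d\ge2$, $\theta>0$, and let $D_{\theta,d}$ be the symmetric Dirichlet distribution on $\Delta_{(d-1)}$ with parameter $(\theta/d,\dots,\theta/d)$. For $n\ge0$ let $Q^{(\theta,d)}_n$ be the degree-$n$ Jacobi kernel of $D_{\theta,d}$, and let $Q^{(\theta,d)\downarrow}_n$ be the degree-$n$ kernel of $D_{\theta,d}$ restricted to symmetric functions (defined below). Then for all $x,y\in\Delta_{(d-1)}$, $$Q^{(\theta,d)\downarrow}_n(x,y)=\frac1{d!}\sum_{\sigma\in S_d}Q^{(\theta,d)}_n(\sigma x,y)=\frac{1}{(d!)^2}\sum_{\sigma,\tau\in S_d}Q^{(\theta,d)}_n(\sigma x,\tau y)=\sum_{m=0}^na^{\theta}_{nm}\frac1{d!}\sum_{\sigma\in S_d}\xi^{(\theta,d)}_m(\sigma x,y).$$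
   Context: $\Delta_{(d-1)}=\{x\in[0,1]^d:\sum_ix_i=1\}$; $S_d$ is the symmetric group, $\sigma x=(x_{\sigma(1)},\dots,x_{\sigma(d)})$. For a Dirichlet law $D_\beta$ (density proportional to $\prod x_i^{\beta_i-1}$), the Jacobi kernel $Q^\beta_n(x,y)=\sum_kP_k(x)P_k(y)$ with $(P_k)$ an $L^2(D_\beta)$-orthonormal basis of the polynomials of degree $\le n$ orthogonal to all lower-degree polynomials. $Q^{(\theta,d)\downarrow}_n(x,y)=\sum_kS_k(x)S_k(y)$ where $(S_k)$ is an $L^2(D_{\theta,d})$-orthonormal basis of the space of symmetric (i.e. $S_d$-invariant) polynomials of degree $\le n$ orthogonal to all symmetric polynomials of degree $<n$; it is the kernel of the ranked (decreasingly ordered) Dirichlet distribution. $a^{\theta}_{nm}=(\theta+2n-1)(-1)^{n-m}\frac{(\theta+m)_{(n-1)}}{m!(n-m)!}$ (with $a^\theta_{00}=1$), $(c)_{(k)}=\Gamma(c+k)/\Gamma(c)$. $\xi^{(\theta,d)}_m(x,y)=\sum_{l\in\mathbb Z^d_+,|l|=m}\binom{m}{l}^2x^ly^l/DM_{(\theta/d,\dots,\theta/d)}(l;m)$ where $DM_\beta(l;m)=\binom ml\prod_i(\beta_i)_{(l_i)}/(|\beta|)_{(m)}$. *)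

theory Defs
  imports "HOL-Analysis.Analysis"
begin

text \<open>Points of the dsimplex are functions nat => real, coordinates 0..d-1,
  and identically zero beyond d-1.\<close>

definition dsimplex :: "nat \<Rightarrow> (nat \<Rightarrow> real) set" where
  "dsimplex d = {x. (\<forall>i<d. 0 \<le> x i) \<and> (\<forall>i. d \<le> i \<longrightarrow> x i = 0) \<and> (\<Sum>i<d. x i) = 1}"

definition perm_act :: "(nat \<Rightarrow> nat) \<Rightarrow> (nat \<Rightarrow> real) \<Rightarrow> (nat \<Rightarrow> real)" where
  "perm_act \<sigma> x = (\<lambda>i. x (\<sigma> i))"

definition Sym :: "nat \<Rightarrow> (nat \<Rightarrow> nat) set" where
  "Sym d = {\<sigma>. \<sigma> permutes {..<d}}"

text \<open>Dirichlet law D_beta on the dsimplex, realised through the coordinates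
  u_0..u_(d-2) (Lebesgue measure), with x_(d-1) = 1 - sum u.\<close>

definition dlift :: "nat \<Rightarrow> (nat \<Rightarrow> real) \<Rightarrow> (nat \<Rightarrow> real)" where
  "dlift d u = (\<lambda>i. if i < d - 1 then u i else if i = d - 1 then 1 - (\<Sum>j<d-1. u j) else 0)"

definition dregion :: "nat \<Rightarrow> (nat \<Rightarrow> real) set" where
  "dregion d = {u. (\<forall>i<d-1. 0 \<le> u i) \<and> (\<Sum>j<d-1. u j) \<le> 1}"

definition dir_dens :: "nat \<Rightarrow> (nat \<Rightarrow> real) \<Rightarrow> (nat \<Rightarrow> real) \<Rightarrow> real" where
  "dir_dens d \<beta> x = (\<Prod>i<d. x i powr (\<beta> i - 1))"

definition dleb :: "nat \<Rightarrow> (nat \<Rightarrow> real) measure" where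
  "dleb d = PiM {..<d-1} (\<lambda>_. lborel)"

definition dir_expect :: "nat \<Rightarrow> (nat \<Rightarrow> real) \<Rightarrow> ((nat \<Rightarrow> real) \<Rightarrow> real) \<Rightarrow> real" where
  "dir_expect d \<beta> h =
     (\<integral>u. indicator (dregion d) u * h (dlift d u) * dir_dens d \<beta> (dlift d u) \<partial>dleb d) /
     (\<integral>u. indicator (dregion d) u * dir_dens d \<beta> (dlift d u) \<partial>dleb d)"

definition dir_inner :: "nat \<Rightarrow> (nat \<Rightarrow> real) \<Rightarrow> ((nat \<Rightarrow> real) \<Rightarrow> real) \<Rightarrow> ((nat \<Rightarrow> real) \<Rightarrow> real) \<Rightarrow> real" where
  "dir_inner d \<beta> f g = dir_expect d \<beta> (\<lambda>x. f x * g x)"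

definition mindex_eq :: "nat \<Rightarrow> nat \<Rightarrow> (nat \<Rightarrow> nat) set" where
  "mindex_eq d m = {l. (\<forall>i. d \<le> i \<longrightarrow> l i = 0) \<and> (\<Sum>i<d. l i) = m}"

definition mindex_le :: "nat \<Rightarrow> nat \<Rightarrow> (nat \<Rightarrow> nat) set" where
  "mindex_le d n = {l. (\<forall>i. d \<le> i \<longrightarrow> l i = 0) \<and> (\<Sum>i<d. l i) \<le> n}"

definition pmono :: "nat \<Rightarrow> (nat \<Rightarrow> nat) \<Rightarrow> (nat \<Rightarrow> real) \<Rightarrow> real" where
  "pmono d l x = (\<Prod>i<d. x i ^ l i)"

definition polys :: "nat \<Rightarrow> nat \<Rightarrow> ((nat \<Rightarrow> real) \<Rightarrow> real) set" where
  "polys d n = {f. \<exists>c. f = (\<lambda>x. \<Sum>l\<in>mindex_le d n. c l * pmono d l x)}"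

definition symmetric_fun :: "nat \<Rightarrow> ((nat \<Rightarrow> real) \<Rightarrow> real) \<Rightarrow> bool" where
  "symmetric_fun d f = (\<forall>\<sigma>\<in>Sym d. \<forall>x\<in>dsimplex d. f (perm_act \<sigma> x) = f x)"

definition Vspace :: "nat \<Rightarrow> (nat \<Rightarrow> real) \<Rightarrow> nat \<Rightarrow> ((nat \<Rightarrow> real) \<Rightarrow> real) set" where
  "Vspace d \<beta> n = {f \<in> polys d n. \<forall>m<n. \<forall>g\<in>polys d m. dir_inner d \<beta> f g = 0}"

definition Vsym :: "nat \<Rightarrow> (nat \<Rightarrow> real) \<Rightarrow> nat \<Rightarrow> ((nat \<Rightarrow> real) \<Rightarrow> real) set" where
  "Vsym d \<beta> n = {f \<in> polys d n. symmetric_fun d f \<and>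
      (\<forall>m<n. \<forall>g\<in>polys d m. symmetric_fun d g \<longrightarrow> dir_inner d \<beta> f g = 0)}"

definition onb :: "nat \<Rightarrow> (nat \<Rightarrow> real) \<Rightarrow> ((nat \<Rightarrow> real) \<Rightarrow> real) set
    \<Rightarrow> nat \<Rightarrow> (nat \<Rightarrow> (nat \<Rightarrow> real) \<Rightarrow> real) \<Rightarrow> bool" where
  "onb d \<beta> V K P =
     ((\<forall>k<K. P k \<in> V) \<and>
      (\<forall>j<K. \<forall>k<K. dir_inner d \<beta> (P j) (P k) = (if j = k then 1 else 0)) \<and>
      (\<forall>f\<in>V. \<exists>c. \<forall>x\<in>dsimplex d. f x = (\<Sum>k<K. c k * P k x)))"

definition okernel :: "nat \<Rightarrow> (nat \<Rightarrow> (nat \<Rightarrow> real) \<Rightarrow> real) \<Rightarrow> (nat \<Rightarrow> real) \<Rightarrow> (nat \<Rightarrow> real) \<Rightarrow> real" where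
  "okernel K P x y = (\<Sum>k<K. P k x * P k y)"

definition symparam :: "real \<Rightarrow> nat \<Rightarrow> nat \<Rightarrow> real" where
  "symparam \<theta> d = (\<lambda>i. \<theta> / real d)"

definition a_coef :: "real \<Rightarrow> nat \<Rightarrow> nat \<Rightarrow> real" where
  "a_coef \<theta> n m = (if n = 0 \<and> m = 0 then 1 else
     (\<theta> + 2 * real n - 1) * (-1) ^ (n - m) * pochhammer (\<theta> + real m) (n - 1)
       / (fact m * fact (n - m)))"

definition multinom :: "nat \<Rightarrow> nat \<Rightarrow> (nat \<Rightarrow> nat) \<Rightarrow> real" where
  "multinom d m l = fact m / (\<Prod>i<d. fact (l i))"

definition DM :: "nat \<Rightarrow> (nat \<Rightarrow> real) \<Rightarrow> (nat \<Rightarrow> nat) \<Rightarrow> nat \<Rightarrow> real" where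
  "DM d \<beta> l m = multinom d m l * (\<Prod>i<d. pochhammer (\<beta> i) (l i)) / pochhammer (\<Sum>i<d. \<beta> i) m"

definition xi :: "real \<Rightarrow> nat \<Rightarrow> nat \<Rightarrow> (nat \<Rightarrow> real) \<Rightarrow> (nat \<Rightarrow> real) \<Rightarrow> real" where
  "xi \<theta> d m x y = (\<Sum>l\<in>mindex_eq d m.
      (multinom d m l)^2 * pmono d l x * pmono d l y / DM d (symparam \<theta> d) l m)"

end

theory Submission
  imports Defs "HOL-Library.FuncSet"
begin

lemma dlift_meas[measurable]: "(\<lambda>u. dlift d u i) \<in> borel_measurable (dleb d)"
proof (cases "i < d - 1")
  case True
  then have "(\<lambda>u. dlift d u i) = (\<lambda>u. u i)" by (auto simp: dlift_def)
  then show ?thesis using True unfolding dleb_def by simp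
next
  case False
  then have "(\<lambda>u. dlift d u i) = (\<lambda>u. if i = d - 1 then 1 - (\<Sum>j<d-1. u j) else 0)" by (auto simp: dlift_def fun_eq_iff)
  then show ?thesis unfolding dleb_def by simp
qed

lemma beta_scaled:
  fixes a b c :: real
  assumes a: "a > 0" and b: "b > 0" and c: "c \<ge> 0"
  shows "(\<integral>\<^sup>+t. ennreal (indicator {0..c} t * (t powr (a-1) * (c-t) powr (b-1))) \<partial>lborel)
         = ennreal (c powr (a+b-1) * Beta a b)"
proof (cases "c = 0")
  case True
  have AE0: "AE t in lborel. ennreal (indicator {0..c} t * (t powr (a-1) * (c-t) powr (b-1))) = 0"
    using AE_lborel_singleton[of 0] by eventually_elim (auto simp: True indicator_def)
  then have "(\<integral>\<^sup>+t. ennreal (indicator {0..c} t * (t powr (a-1) * (c-t) powr (b-1))) \<partial>lborel) = (\<integral>\<^sup>+t. 0 \<partial>lborel)"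
    using nn_integral_cong_AE[OF AE0] by simp
  then show ?thesis using True by simp
next
  case False
  with c have cp: "c > 0" by simp
  have B: "((\<lambda>t. t powr (a - 1) * (1 - t) powr (b - 1)) has_integral Beta a b) {0..1}"
    by (rule has_integral_Beta_real[OF a b])
  have B2: "(\<integral>\<^sup>+x. ennreal (indicator {0..1} x * (x powr (a - 1) * (1 - x) powr (b - 1))) \<partial>lborel) = ennreal (Beta a b)"
    using nn_integral_has_integral_lebesgue[OF _ B] by simp
  have "(\<integral>\<^sup>+t. ennreal (indicator {0..c} t * (t powr (a-1) * (c-t) powr (b-1))) \<partial>lborel)
     = ennreal \<bar>c\<bar> * (\<integral>\<^sup>+x. ennreal (indicator {0..c} (0 + c*x) * ((0 + c*x) powr (a-1) * (c-(0 + c*x)) powr (b-1))) \<partial>lborel)"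
    by (rule nn_integral_real_affine) (use cp in auto)
  also have "(\<lambda>x. ennreal (indicator {0..c} (0 + c*x) * ((0 + c*x) powr (a-1) * (c-(0 + c*x)) powr (b-1))))
      = (\<lambda>x. ennreal (c powr (a - 1) * c powr (b - 1)) * ennreal (indicator {0..1} x * (x powr (a - 1) * (1 - x) powr (b - 1))))"
  proof
    fix x
    show "ennreal (indicator {0..c} (0 + c*x) * ((0 + c*x) powr (a-1) * (c-(0 + c*x)) powr (b-1)))
      = ennreal (c powr (a - 1) * c powr (b - 1)) * ennreal (indicator {0..1} x * (x powr (a - 1) * (1 - x) powr (b - 1)))"
    proof (cases "x \<in> {0..1}")
      case True
      then have x0: "0 \<le> x" "x \<le> 1" by auto
      have e1: "c * x \<in> {0..c}" using x0 cp by (auto simp: mult_left_le)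
      have e2: "c - c * x = c * (1 - x)" by (simp add: algebra_simps)
      show ?thesis using e1 x0 cp
        by (simp add: e2 powr_mult ennreal_mult[symmetric] mult_ac)
    next
      case False
      then have "c * x \<notin> {0..c}" using cp
        by (auto simp: zero_le_mult_iff mult_le_cancel_left1)
      then show ?thesis using False by simp
    qed
  qed
  also have "ennreal \<bar>c\<bar> * (\<integral>\<^sup>+x. ennreal (c powr (a - 1) * c powr (b - 1)) * ennreal (indicator {0..1} x * (x powr (a - 1) * (1 - x) powr (b - 1))) \<partial>lborel)
    = ennreal \<bar>c\<bar> * (ennreal (c powr (a - 1) * c powr (b - 1)) * ennreal (Beta a b))"
    by (subst nn_integral_cmult) (auto simp: B2)
  also have "\<dots> = ennreal (c powr (a+b-1) * Beta a b)"
  proof -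
    have pw: "c powr (a+b-1) = c * (c powr (a-1) * c powr (b-1))"
    proof -
      have "c * (c powr (a-1) * c powr (b-1)) = c powr 1 * c powr ((a-1) + (b-1))"
        using cp by (simp only: powr_add powr_one less_imp_le)
      also have "\<dots> = c powr (1 + ((a-1) + (b-1)))" by (simp only: powr_add)
      also have "1 + ((a-1) + (b-1)) = a + b - 1" by simp
      finally show ?thesis by simp
    qed
    have "Beta a b \<ge> 0" using a b by (simp add: Beta_def Gamma_real_pos less_imp_le)
    then show ?thesis using cp
      by (simp add: pw ennreal_mult[symmetric] mult.assoc)
  qed
  finally show ?thesis .
qed

lemma dregion_meas[measurable]: "(\<lambda>u. indicator (dregion d) u :: real) \<in> borel_measurable (dleb d)"
proof -
  have "(\<lambda>u. indicator (dregion d) u :: real) = (\<lambda>u. if (\<forall>i\<in>{..<d-1}. 0 \<le> u i) \<and> (\<Sum>j<d-1. u j) \<le> 1 then 1 else 0)"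
    by (auto simp: dregion_def indicator_def fun_eq_iff)
  moreover have "(\<lambda>u. if (\<forall>i\<in>{..<d-1}. 0 \<le> u i) \<and> (\<Sum>j<d-1. u j) \<le> (1::real) then 1 else (0::real)) \<in> borel_measurable (dleb d)"
    unfolding dleb_def by measurable
  ultimately show ?thesis by simp
qed

lemma dens_meas[measurable]: "(\<lambda>u. dir_dens d \<beta> (dlift d u)) \<in> borel_measurable (dleb d)"
  unfolding dir_dens_def by measurable

definition dint :: "nat \<Rightarrow> (nat \<Rightarrow> real) \<Rightarrow> ennreal" where
  "dint d \<beta> = (\<integral>\<^sup>+u. ennreal (indicator (dregion d) u * dir_dens d \<beta> (dlift d u)) \<partial>dleb d)"

lemma dint_one: "dint (Suc 0) \<beta> = 1"
proof -
  have "\<And>u. indicator (dregion (Suc 0)) u * dir_dens (Suc 0) \<beta> (dlift (Suc 0) u) = (1::real)"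
    by (simp add: dregion_def dir_dens_def dlift_def)
  then show ?thesis unfolding dint_def dleb_def
    by (simp add: PiM_empty)
qed

lemma dint_step:
  assumes a: "\<beta> k > 0" and b: "\<beta> (Suc k) > 0"
  shows "dint (Suc (Suc k)) \<beta> = ennreal (Beta (\<beta> k) (\<beta> (Suc k))) * dint (Suc k) (\<beta>(k := \<beta> k + \<beta> (Suc k)))"
proof -
  interpret product_sigma_finite "\<lambda>_. lborel" by standard
  define F where "F u = ennreal (indicator (dregion (Suc (Suc k))) u * dir_dens (Suc (Suc k)) \<beta> (dlift (Suc (Suc k)) u))" for u
  define \<beta>' where "\<beta>' = \<beta>(k := \<beta> k + \<beta> (Suc k))"
  define G where "G x = ennreal (indicator (dregion (Suc k)) x * dir_dens (Suc k) \<beta>' (dlift (Suc k) x))" for x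
  have dl: "dleb (Suc (Suc k)) = Pi\<^sub>M (insert k {..<k}) (\<lambda>_. lborel)"
    by (simp add: dleb_def lessThan_Suc)
  have Fm: "F \<in> borel_measurable (Pi\<^sub>M (insert k {..<k}) (\<lambda>_. lborel))"
    unfolding F_def dl[symmetric] by measurable
  have "dint (Suc (Suc k)) \<beta> = (\<integral>\<^sup>+ x. (\<integral>\<^sup>+ t. F (x(k := t)) \<partial>lborel) \<partial>(Pi\<^sub>M {..<k} (\<lambda>_. lborel)))"
    unfolding dint_def F_def[symmetric] dl
    by (rule product_nn_integral_insert) (auto simp: Fm)
  also have "\<dots> = (\<integral>\<^sup>+ x. ennreal (Beta (\<beta> k) (\<beta> (Suc k))) * G x \<partial>(Pi\<^sub>M {..<k} (\<lambda>_. lborel)))"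
  proof (rule nn_integral_cong)
    fix x :: "nat \<Rightarrow> real"
    define s where "s = (\<Sum>j<k. x j)"
    define P0 where "P0 = (if \<forall>i<k. 0 \<le> x i then 1 else 0) * (\<Prod>i<k. x i powr (\<beta> i - 1))"
    have P0: "P0 \<ge> 0" unfolding P0_def by (auto intro!: prod_nonneg)
    have Fx: "F (x(k := t)) = ennreal P0 * ennreal (indicator {0..1-s} t * (t powr (\<beta> k - 1) * ((1-s)-t) powr (\<beta> (Suc k) - 1)))" for t
    proof -
      have sum1: "(\<Sum>j<Suc k. (x(k := t)) j) = s + t" by (simp add: s_def)
      have sum0: "(\<Sum>j<k. (x(k := t)) j) = s" by (simp add: s_def)
      have reg: "(x(k := t) \<in> dregion (Suc (Suc k))) = ((\<forall>i<k. 0 \<le> x i) \<and> t \<in> {0..1-s})"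
        by (auto simp: dregion_def sum1 less_Suc_eq s_def)
      have pr: "dir_dens (Suc (Suc k)) \<beta> (dlift (Suc (Suc k)) (x(k := t)))
          = (\<Prod>i<k. x i powr (\<beta> i - 1)) * (t powr (\<beta> k - 1) * ((1-s)-t) powr (\<beta> (Suc k) - 1))"
        by (simp add: dir_dens_def dlift_def sum1 algebra_simps s_def)
      show ?thesis
        unfolding F_def pr using P0
        by (auto simp: reg P0_def ennreal_mult[symmetric] indicator_def mult_ac)
    qed
    have "(\<integral>\<^sup>+ t. F (x(k := t)) \<partial>lborel) = ennreal P0 * (\<integral>\<^sup>+ t. ennreal (indicator {0..1-s} t * (t powr (\<beta> k - 1) * ((1-s)-t) powr (\<beta> (Suc k) - 1))) \<partial>lborel)"
      unfolding Fx by (rule nn_integral_cmult) measurable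
    also have "\<dots> = ennreal (Beta (\<beta> k) (\<beta> (Suc k))) * G x"
    proof (cases "s \<le> 1")
      case True
      have reg: "(x \<in> dregion (Suc k)) = (\<forall>i<k. 0 \<le> x i)" using True by (simp add: dregion_def s_def)
      have pr: "dir_dens (Suc k) \<beta>' (dlift (Suc k) x) = (\<Prod>i<k. x i powr (\<beta> i - 1)) * (1 - s) powr (\<beta> k + \<beta> (Suc k) - 1)"
        by (simp add: dir_dens_def dlift_def \<beta>'_def s_def)
      have Bp: "Beta (\<beta> k) (\<beta> (Suc k)) \<ge> 0" using a b by (simp add: Beta_def Gamma_real_pos less_imp_le)
      show ?thesis
        apply (subst beta_scaled[OF a b]) using True apply simp
        unfolding G_def pr using P0 Bp
        by (auto simp: P0_def ennreal_mult[symmetric] mult_ac indicator_def reg)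
    next
      case False
      have reg: "x \<notin> dregion (Suc k)" using False by (simp add: dregion_def s_def)
      show ?thesis using False by (simp add: G_def reg)
    qed
    finally show "(\<integral>\<^sup>+ t. F (x(k := t)) \<partial>lborel) = ennreal (Beta (\<beta> k) (\<beta> (Suc k))) * G x" .
  qed
  also have "\<dots> = ennreal (Beta (\<beta> k) (\<beta> (Suc k))) * dint (Suc k) \<beta>'"
  proof -
    have "G \<in> borel_measurable (dleb (Suc k))" unfolding G_def by measurable
    then have "G \<in> borel_measurable (Pi\<^sub>M {..<k} (\<lambda>_. lborel))" by (simp add: dleb_def)
    then show ?thesis unfolding dint_def G_def[symmetric]
      by (subst nn_integral_cmult) (simp_all add: dleb_def)
  qed
  finally show ?thesis unfolding \<beta>'_def .
qed

lemma Gamma_pos_ne: "(x::real) > 0 \<Longrightarrow> Gamma x > 0" by (rule Gamma_real_pos)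

lemma dint_formula:
  assumes "\<forall>i<Suc k. 0 < \<beta> i"
  shows "dint (Suc k) \<beta> = ennreal ((\<Prod>i<Suc k. Gamma (\<beta> i)) / Gamma (\<Sum>i<Suc k. \<beta> i))"
  using assms
proof (induction k arbitrary: \<beta>)
  case 0
  then have "Gamma (\<beta> 0) > 0" by (intro Gamma_real_pos) simp
  then show ?case by (simp add: dint_one)
next
  case (Suc k)
  define \<beta>' where "\<beta>' = \<beta>(k := \<beta> k + \<beta> (Suc k))"
  have a: "\<beta> k > 0" and b: "\<beta> (Suc k) > 0" using Suc.prems by auto
  have pos': "\<forall>i<Suc k. 0 < \<beta>' i"
  proof (intro allI impI)
    fix i assume "i < Suc k"
    then show "0 < \<beta>' i" using Suc.prems add_pos_pos[OF a b] by (cases "i = k") (auto simp: \<beta>'_def)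
  qed
  have "dint (Suc (Suc k)) \<beta> = ennreal (Beta (\<beta> k) (\<beta> (Suc k))) * dint (Suc k) \<beta>'"
    unfolding \<beta>'_def by (rule dint_step[OF a b])
  also have "\<dots> = ennreal (Beta (\<beta> k) (\<beta> (Suc k))) * ennreal ((\<Prod>i<Suc k. Gamma (\<beta>' i)) / Gamma (\<Sum>i<Suc k. \<beta>' i))"
    using Suc.IH[OF pos'] by simp
  also have "(\<Prod>i<Suc k. Gamma (\<beta>' i)) = (\<Prod>i<k. Gamma (\<beta> i)) * Gamma (\<beta> k + \<beta> (Suc k))"
    by (simp add: \<beta>'_def)
  also have "(\<Sum>i<Suc k. \<beta>' i) = (\<Sum>i<Suc (Suc k). \<beta> i)"
    by (simp add: \<beta>'_def)
  also have "ennreal (Beta (\<beta> k) (\<beta> (Suc k))) * ennreal ((\<Prod>i<k. Gamma (\<beta> i)) * Gamma (\<beta> k + \<beta> (Suc k)) / Gamma (\<Sum>i<Suc (Suc k). \<beta> i))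
     = ennreal ((\<Prod>i<Suc (Suc k). Gamma (\<beta> i)) / Gamma (\<Sum>i<Suc (Suc k). \<beta> i))"
  proof -
    have g1: "Gamma (\<beta> k + \<beta> (Suc k)) > 0" using a b by (intro Gamma_real_pos) simp
    have B0: "Beta (\<beta> k) (\<beta> (Suc k)) \<ge> 0" using a b by (simp add: Beta_def Gamma_real_pos less_imp_le)
    have P0: "(\<Prod>i<k. Gamma (\<beta> i)) \<ge> 0"
    proof (rule prod_nonneg)
      fix i assume "i \<in> {..<k}"
      then have "\<beta> i > 0" using Suc.prems by auto
      then show "Gamma (\<beta> i) \<ge> 0" using Gamma_real_pos less_imp_le by blast
    qed
    have S0: "Gamma (\<Sum>i<Suc (Suc k). \<beta> i) > 0"
      using Suc.prems by (intro Gamma_real_pos sum_pos) auto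
    have "Beta (\<beta> k) (\<beta> (Suc k)) * ((\<Prod>i<k. Gamma (\<beta> i)) * Gamma (\<beta> k + \<beta> (Suc k)) / Gamma (\<Sum>i<Suc (Suc k). \<beta> i))
       = (\<Prod>i<Suc (Suc k). Gamma (\<beta> i)) / Gamma (\<Sum>i<Suc (Suc k). \<beta> i)"
      using g1 by (simp add: Beta_def field_simps)
    moreover have Xn: "(\<Prod>i<k. Gamma (\<beta> i)) * Gamma (\<beta> k + \<beta> (Suc k)) / Gamma (\<Sum>i<Suc (Suc k). \<beta> i) \<ge> 0"
      using P0 S0 g1 by simp
    ultimately show ?thesis by (simp only: ennreal_mult[OF B0 Xn, symmetric])
  qed
  finally show ?case .
qed

definition gam :: "nat \<Rightarrow> (nat \<Rightarrow> real) \<Rightarrow> real" where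
  "gam d \<beta> = (\<Prod>i<d. Gamma (\<beta> i)) / Gamma (\<Sum>i<d. \<beta> i)"

definition Bnd :: "nat \<Rightarrow> ((nat \<Rightarrow> real) \<Rightarrow> real) \<Rightarrow> bool" where
  "Bnd d h = ((\<lambda>u. h (dlift d u)) \<in> borel_measurable (dleb d) \<and> (\<exists>C. \<forall>x\<in>dsimplex d. \<bar>h x\<bar> \<le> C))"

lemma dlift_simplex: assumes "u \<in> dregion d" "1 \<le> d" shows "dlift d u \<in> dsimplex d"
proof -
  have "(\<Sum>i<d. dlift d u i) = (\<Sum>i<d-1. dlift d u i) + dlift d u (d-1)"
    using assms(2) by (metis Suc_diff_1 less_le_trans sum.lessThan_Suc zero_less_one)
  also have "\<dots> = 1" by (simp add: dlift_def)
  finally have s: "(\<Sum>i<d. dlift d u i) = 1" .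
  have "\<forall>i<d. 0 \<le> dlift d u i"
  proof (intro allI impI)
    fix i assume "i < d"
    then show "0 \<le> dlift d u i" using assms(1) by (auto simp: dlift_def dregion_def)
  qed
  moreover have "\<forall>i. d \<le> i \<longrightarrow> dlift d u i = 0" using assms(2) by (auto simp: dlift_def)
  ultimately show ?thesis using s by (simp add: dsimplex_def)
qed

lemma dens_nonneg: "dir_dens d \<beta> x \<ge> 0"
  unfolding dir_dens_def by (auto intro: prod_nonneg)

lemma gam_pos: assumes "\<forall>i<d. 0 < \<beta> i" "1 \<le> d" shows "gam d \<beta> > 0"
proof -
  have "(\<Prod>i<d. Gamma (\<beta> i)) > 0" using assms by (auto intro!: prod_pos Gamma_real_pos)
  moreover have "{..<d} \<noteq> {}" using assms(2) lessThan_empty_iff by (metis not_one_le_zero)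
  then have "Gamma (\<Sum>i<d. \<beta> i) > 0" using assms
    by (intro Gamma_real_pos sum_pos) auto
  ultimately show ?thesis by (simp add: gam_def)
qed

lemma dint_gam: assumes "\<forall>i<d. 0 < \<beta> i" "1 \<le> d" shows "dint d \<beta> = ennreal (gam d \<beta>)"
proof -
  obtain k where k: "d = Suc k" using assms(2) by (metis Suc_diff_1 less_le_trans zero_less_one)
  show ?thesis using dint_formula[of k \<beta>] assms by (simp add: k gam_def)
qed

lemma integrable_dens: assumes "\<forall>i<d. 0 < \<beta> i" "1 \<le> d"
  shows "integrable (dleb d) (\<lambda>u. indicator (dregion d) u * dir_dens d \<beta> (dlift d u))"
  by (rule integrableI_nonneg) (use dint_gam[OF assms] in \<open>auto simp: dint_def dens_nonneg\<close>)

lemma integral_dens: assumes "\<forall>i<d. 0 < \<beta> i" "1 \<le> d"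
  shows "(\<integral>u. indicator (dregion d) u * dir_dens d \<beta> (dlift d u) \<partial>dleb d) = gam d \<beta>"
proof -
  have "(\<integral>u. indicator (dregion d) u * dir_dens d \<beta> (dlift d u) \<partial>dleb d) = enn2real (dint d \<beta>)"
    unfolding dint_def by (rule integral_eq_nn_integral) (auto simp: dens_nonneg)
  then show ?thesis using dint_gam[OF assms] gam_pos[OF assms] by simp
qed

lemma integrable_Bnd: assumes "\<forall>i<d. 0 < \<beta> i" "1 \<le> d" "Bnd d h"
  shows "integrable (dleb d) (\<lambda>u. indicator (dregion d) u * h (dlift d u) * dir_dens d \<beta> (dlift d u))"
proof -
  obtain C where C: "\<forall>x\<in>dsimplex d. \<bar>h x\<bar> \<le> C" and hm: "(\<lambda>u. h (dlift d u)) \<in> borel_measurable (dleb d)"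
    using assms(3) by (auto simp: Bnd_def)
  have i1: "integrable (dleb d) (\<lambda>u. C * (indicator (dregion d) u * dir_dens d \<beta> (dlift d u)))"
    using integrable_dens[OF assms(1,2)] by simp
  show ?thesis
  proof (rule Bochner_Integration.integrable_bound[OF i1])
    show "(\<lambda>u. indicator (dregion d) u * h (dlift d u) * dir_dens d \<beta> (dlift d u)) \<in> borel_measurable (dleb d)"
      using hm by measurable
    show "AE u in dleb d. norm (indicator (dregion d) u * h (dlift d u) * dir_dens d \<beta> (dlift d u))
        \<le> norm (C * (indicator (dregion d) u * dir_dens d \<beta> (dlift d u)))"
    proof (rule AE_I2)
      fix u
      show "norm (indicator (dregion d) u * h (dlift d u) * dir_dens d \<beta> (dlift d u))
        \<le> norm (C * (indicator (dregion d) u * dir_dens d \<beta> (dlift d u)))"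
      proof (cases "u \<in> dregion d")
        case True
        then have "\<bar>h (dlift d u)\<bar> \<le> C" using C dlift_simplex[OF True assms(2)] by auto
        then show ?thesis using True dens_nonneg[of d \<beta> "dlift d u"]
          by (auto simp: abs_mult intro!: mult_right_mono)
      qed simp
    qed
  qed
qed

lemma Gamma_poch: assumes "(z::real) > 0" shows "Gamma (z + real n) = pochhammer z n * Gamma z"
proof -
  have "z \<notin> \<int>\<^sub>\<le>\<^sub>0" using assms nonpos_Ints_nonpos by force
  then have "pochhammer z n = Gamma (z + of_nat n) / Gamma z" by (rule pochhammer_Gamma)
  moreover have "Gamma z > 0" using assms by (rule Gamma_real_pos)
  ultimately show ?thesis by simp
qed

lemma pow_powr: assumes "(x::real) \<ge> 0" shows "x ^ n * x powr (b - 1) = x powr (b + real n - 1)"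
proof (cases "x = 0")
  case True then show ?thesis by simp
next
  case False
  then have "x > 0" using assms by simp
  then have "x ^ n * x powr (b - 1) = x powr (real n + (b - 1))" by (simp add: powr_realpow[symmetric] powr_add[symmetric])
  also have "real n + (b - 1) = b + real n - 1" by simp
  finally show ?thesis .
qed

lemma simplex_le1: assumes "x \<in> dsimplex d" "i < d" shows "0 \<le> x i" "x i \<le> 1"
proof -
  show "0 \<le> x i" using assms by (auto simp: dsimplex_def)
  have "x i \<le> (\<Sum>j<d. x j)" using assms by (intro member_le_sum) (auto simp: dsimplex_def)
  then show "x i \<le> 1" using assms by (simp add: dsimplex_def)
qed

locale dset =
  fixes d :: nat and \<beta> :: "nat \<Rightarrow> real"
  assumes pos: "\<forall>i<d. 0 < \<beta> i" and d1: "1 \<le> d"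
begin

abbreviation E where "E h \<equiv> dir_expect d \<beta> h"

lemma E_alt: "E h = (\<integral>u. indicator (dregion d) u * h (dlift d u) * dir_dens d \<beta> (dlift d u) \<partial>dleb d) / gam d \<beta>"
  unfolding dir_expect_def integral_dens[OF pos d1] ..

lemma E_cmult: "E (\<lambda>x. c * f x) = c * E f"
  unfolding E_alt by (simp add: mult_ac)

lemma E_sum: assumes "finite I" "\<And>i. i \<in> I \<Longrightarrow> Bnd d (f i)"
  shows "E (\<lambda>x. \<Sum>i\<in>I. f i x) = (\<Sum>i\<in>I. E (f i))"
proof -
  have "(\<lambda>u. indicator (dregion d) u * (\<Sum>i\<in>I. f i (dlift d u)) * dir_dens d \<beta> (dlift d u))
      = (\<lambda>u. \<Sum>i\<in>I. indicator (dregion d) u * f i (dlift d u) * dir_dens d \<beta> (dlift d u))"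
    by (simp add: sum_distrib_left sum_distrib_right)
  then show ?thesis unfolding E_alt
    by (simp add: integral_sum integrable_Bnd[OF pos d1 assms(2)] sum_divide_distrib)
qed

lemma E_add: assumes "Bnd d f" "Bnd d g" shows "E (\<lambda>x. f x + g x) = E f + E g"
proof -
  have "(\<lambda>u. indicator (dregion d) u * (f (dlift d u) + g (dlift d u)) * dir_dens d \<beta> (dlift d u))
      = (\<lambda>u. indicator (dregion d) u * f (dlift d u) * dir_dens d \<beta> (dlift d u) + indicator (dregion d) u * g (dlift d u) * dir_dens d \<beta> (dlift d u))"
    by (simp add: algebra_simps)
  then show ?thesis unfolding E_alt
    by (simp add: integrable_Bnd[OF pos d1 assms(1)] integrable_Bnd[OF pos d1 assms(2)] add_divide_distrib)
qed

lemma E_diff: assumes "Bnd d f" "Bnd d g" shows "E (\<lambda>x. f x - g x) = E f - E g"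
proof -
  have "(\<lambda>u. indicator (dregion d) u * (f (dlift d u) - g (dlift d u)) * dir_dens d \<beta> (dlift d u))
      = (\<lambda>u. indicator (dregion d) u * f (dlift d u) * dir_dens d \<beta> (dlift d u) - indicator (dregion d) u * g (dlift d u) * dir_dens d \<beta> (dlift d u))"
    by (simp add: algebra_simps)
  then show ?thesis unfolding E_alt
    by (simp add: integrable_Bnd[OF pos d1 assms(1)] integrable_Bnd[OF pos d1 assms(2)] diff_divide_distrib)
qed

lemma E_cong: assumes "\<And>x. x \<in> dsimplex d \<Longrightarrow> f x = g x" shows "E f = E g"
proof -
  have "\<And>u. indicator (dregion d) u * f (dlift d u) * dir_dens d \<beta> (dlift d u)
       = indicator (dregion d) u * g (dlift d u) * dir_dens d \<beta> (dlift d u)"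
    using assms dlift_simplex[OF _ d1] by (auto simp: indicator_def)
  then have "(\<lambda>u. indicator (dregion d) u * f (dlift d u) * dir_dens d \<beta> (dlift d u))
       = (\<lambda>u. indicator (dregion d) u * g (dlift d u) * dir_dens d \<beta> (dlift d u))" by (rule ext)
  then show ?thesis unfolding E_alt by simp
qed

lemma E_pmono: "E (pmono d l) = (\<Prod>i<d. pochhammer (\<beta> i) (l i)) / pochhammer (\<Sum>i<d. \<beta> i) (\<Sum>i<d. l i)"
proof -
  define \<gamma> where "\<gamma> i = \<beta> i + real (l i)" for i
  have posg: "\<forall>i<d. 0 < \<gamma> i" using pos by (auto simp: \<gamma>_def add_pos_nonneg)
  have "\<And>u. indicator (dregion d) u * pmono d l (dlift d u) * dir_dens d \<beta> (dlift d u)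
       = indicator (dregion d) u * dir_dens d \<gamma> (dlift d u)"
  proof -
    fix u
    show "indicator (dregion d) u * pmono d l (dlift d u) * dir_dens d \<beta> (dlift d u)
       = indicator (dregion d) u * dir_dens d \<gamma> (dlift d u)"
    proof (cases "u \<in> dregion d")
      case True
      have x: "dlift d u \<in> dsimplex d" by (rule dlift_simplex[OF True d1])
      have "pmono d l (dlift d u) * dir_dens d \<beta> (dlift d u) = (\<Prod>i<d. dlift d u i ^ l i * dlift d u i powr (\<beta> i - 1))"
        by (simp add: pmono_def dir_dens_def prod.distrib)
      also have "\<dots> = dir_dens d \<gamma> (dlift d u)" unfolding dir_dens_def
        by (rule prod.cong) (use simplex_le1[OF x] in \<open>auto simp: pow_powr \<gamma>_def\<close>)
      finally show ?thesis by (simp add: mult.assoc)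
    qed simp
  qed
  then have "(\<lambda>u. indicator (dregion d) u * pmono d l (dlift d u) * dir_dens d \<beta> (dlift d u))
       = (\<lambda>u. indicator (dregion d) u * dir_dens d \<gamma> (dlift d u))" by (rule ext)
  then have "E (pmono d l) = gam d \<gamma> / gam d \<beta>" unfolding E_alt
    by (simp only: integral_dens[OF posg d1])
  also have "\<dots> = (\<Prod>i<d. pochhammer (\<beta> i) (l i)) / pochhammer (\<Sum>i<d. \<beta> i) (\<Sum>i<d. l i)"
  proof -
    have S: "(\<Sum>i<d. \<gamma> i) = (\<Sum>i<d. \<beta> i) + real (\<Sum>i<d. l i)"
      by (simp add: \<gamma>_def sum.distrib)
    have Sp: "(\<Sum>i<d. \<beta> i) > 0"
    proof -
      have "{..<d} \<noteq> {}" using d1 lessThan_empty_iff by (metis not_one_le_zero)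
      then show ?thesis using pos by (intro sum_pos) auto
    qed
    have P: "(\<Prod>i<d. Gamma (\<gamma> i)) = (\<Prod>i<d. pochhammer (\<beta> i) (l i)) * (\<Prod>i<d. Gamma (\<beta> i))"
      by (simp add: \<gamma>_def prod.distrib[symmetric] Gamma_poch pos)
    have G: "Gamma (\<Sum>i<d. \<gamma> i) = pochhammer (\<Sum>i<d. \<beta> i) (\<Sum>i<d. l i) * Gamma (\<Sum>i<d. \<beta> i)"
      unfolding S by (rule Gamma_poch[OF Sp])
    have g1: "Gamma (\<Sum>i<d. \<beta> i) > 0" using Sp by (rule Gamma_real_pos)
    have g2: "(\<Prod>i<d. Gamma (\<beta> i)) > 0" using pos by (auto intro!: prod_pos Gamma_real_pos)
    have g3: "pochhammer (\<Sum>i<d. \<beta> i) (\<Sum>i<d. l i) > 0" using Sp by (rule pochhammer_pos)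
    have aux: "\<And>A B C D. (A::real) > 0 \<Longrightarrow> C > 0 \<Longrightarrow> D > 0 \<Longrightarrow> (B * A) / (D * C) / (A / C) = B / D"
      by (simp add: field_simps)
    show ?thesis unfolding gam_def P G by (rule aux[OF g2 g1 g3])
  qed
  finally show ?thesis .
qed

end

definition mbox :: "nat \<Rightarrow> (nat \<Rightarrow> nat) \<Rightarrow> (nat \<Rightarrow> nat) set" where
  "mbox d j = {r. (\<forall>i<d. r i \<le> j i) \<and> (\<forall>i. d \<le> i \<longrightarrow> r i = 0)}"

definition ext0 :: "nat \<Rightarrow> (nat \<Rightarrow> nat) \<Rightarrow> (nat \<Rightarrow> nat)" where
  "ext0 d g = (\<lambda>i. if i < d then g i else 0)"

lemma bij_ext0: "bij_betw (ext0 d) (PiE {..<d} (\<lambda>i. {..j i})) (mbox d j)"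
proof (rule bij_betwI[where g = "\<lambda>r. restrict r {..<d}"])
  show "ext0 d \<in> PiE {..<d} (\<lambda>i. {..j i}) \<rightarrow> mbox d j"
    by (auto simp: ext0_def mbox_def PiE_def Pi_def)
  show "(\<lambda>r. restrict r {..<d}) \<in> mbox d j \<rightarrow> PiE {..<d} (\<lambda>i. {..j i})"
    by (auto simp: mbox_def)
  show "restrict (ext0 d x) {..<d} = x" if "x \<in> PiE {..<d} (\<lambda>i. {..j i})" for x
    using that by (auto simp: ext0_def restrict_def PiE_def extensional_def fun_eq_iff)
  show "ext0 d (restrict y {..<d}) = y" if "y \<in> mbox d j" for y
    using that by (auto simp: ext0_def restrict_def mbox_def fun_eq_iff)
qed

lemma finite_mbox: "finite (mbox d j)"
  using bij_betw_finite[OF bij_ext0] by (auto intro!: finite_PiE)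

lemma prod_sum_mbox:
  fixes f :: "nat \<Rightarrow> nat \<Rightarrow> 'c::comm_semiring_1"
  shows "(\<Prod>i<d. \<Sum>t\<le>j i. f i t) = (\<Sum>r\<in>mbox d j. \<Prod>i<d. f i (r i))"
proof -
  have "(\<Prod>i<d. \<Sum>t\<le>j i. f i t) = (\<Sum>g\<in>PiE {..<d} (\<lambda>i. {..j i}). \<Prod>i<d. f i (g i))"
    by (rule prod_sum_PiE) auto
  also have "\<dots> = (\<Sum>g\<in>PiE {..<d} (\<lambda>i. {..j i}). \<Prod>i<d. f i (ext0 d g i))"
    by (intro sum.cong prod.cong) (auto simp: ext0_def)
  also have "\<dots> = (\<Sum>r\<in>mbox d j. \<Prod>i<d. f i (r i))"
    using sum.reindex_bij_betw[OF bij_ext0, of "\<lambda>r. \<Prod>i<d. f i (r i)" d j] by simp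
  finally show ?thesis .
qed

lemma mindex_le_mbox: "mindex_le d n \<subseteq> mbox d (\<lambda>_. n)"
proof
  fix l assume l: "l \<in> mindex_le d n"
  have "\<forall>i<d. l i \<le> n"
  proof (intro allI impI)
    fix i assume "i < d"
    then have "l i \<le> (\<Sum>i<d. l i)" by (intro member_le_sum) auto
    then show "l i \<le> n" using l by (auto simp: mindex_le_def)
  qed
  then show "l \<in> mbox d (\<lambda>_. n)" using l by (auto simp: mindex_le_def mbox_def)
qed

lemma finite_mindex_le: "finite (mindex_le d n)"
  using finite_subset[OF mindex_le_mbox finite_mbox] .

lemma mindex_eq_le: "m \<le> n \<Longrightarrow> mindex_eq d m \<subseteq> mindex_le d n"
  by (auto simp: mindex_eq_def mindex_le_def)

lemma finite_mindex_eq: "finite (mindex_eq d m)"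
  using finite_subset[OF mindex_eq_le[of m m] finite_mindex_le] by simp

lemma mindex_eq_split:
  "(\<Sum>l\<in>mindex_eq (Suc d) m. F l) = (\<Sum>t\<le>m. \<Sum>l\<in>mindex_eq d (m-t). F (l(d:=t)))"
proof -
  have "(\<Sum>t\<le>m. \<Sum>l\<in>mindex_eq d (m-t). F (l(d:=t))) = (\<Sum>(t,l)\<in>Sigma {..m} (\<lambda>t. mindex_eq d (m-t)). F (l(d := t)))"
    by (rule sum.Sigma) (auto simp: finite_mindex_eq)
  also have "\<dots> = (\<Sum>p\<in>Sigma {..m} (\<lambda>t. mindex_eq d (m-t)). F ((snd p)(d := fst p)))"
    by (intro sum.cong) auto
  also have "\<dots> = (\<Sum>l\<in>mindex_eq (Suc d) m. F l)"
  proof (rule sum.reindex_bij_witness[where i = "\<lambda>l. (l d, l(d := 0))" and j = "\<lambda>p. (snd p)(d := fst p)"])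
    fix a assume a: "a \<in> Sigma {..m} (\<lambda>t. mindex_eq d (m-t))"
    then show "(((snd a)(d := fst a)) d, ((snd a)(d := fst a))(d := 0)) = a"
      by (cases a) (auto simp: mindex_eq_def fun_eq_iff)
    have s: "(\<Sum>i<Suc d. ((snd a)(d := fst a)) i) = (\<Sum>i<d. snd a i) + fst a"
      by (simp add: sum.lessThan_Suc)
    show "(snd a)(d := fst a) \<in> mindex_eq (Suc d) m"
      using a by (auto simp: mindex_eq_def s)
  next
    fix b assume b: "b \<in> mindex_eq (Suc d) m"
    show "(snd (b d, b(d := 0)))(d := fst (b d, b(d := 0))) = b" by simp
    have s: "(\<Sum>i<Suc d. b i) = (\<Sum>i<d. b i) + b d" by (simp add: sum.lessThan_Suc)
    have s2: "(\<Sum>i<d. (b(d := 0)) i) = (\<Sum>i<d. b i)" by simp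
    show "(b d, b(d := 0)) \<in> Sigma {..m} (\<lambda>t. mindex_eq d (m-t))"
      using b by (auto simp: mindex_eq_def s s2)
  qed simp
  finally show ?thesis by simp
qed

lemma mindex_eq_zero: "mindex_eq 0 m = (if m = 0 then {\<lambda>_. 0} else {})"
  by (auto simp: mindex_eq_def fun_eq_iff)

lemma multinomial_thm:
  "(\<Sum>l\<in>mindex_eq d m. multinom d m l * pmono d l x) = (\<Sum>i<d. x i) ^ m"
proof (induction d arbitrary: m)
  case 0
  then show ?case by (simp add: mindex_eq_zero multinom_def pmono_def)
next
  case (Suc d)
  have "(\<Sum>l\<in>mindex_eq (Suc d) m. multinom (Suc d) m l * pmono (Suc d) l x)
      = (\<Sum>t\<le>m. \<Sum>l\<in>mindex_eq d (m-t). multinom (Suc d) m (l(d:=t)) * pmono (Suc d) (l(d:=t)) x)"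
    by (rule mindex_eq_split)
  also have "\<dots> = (\<Sum>t\<le>m. \<Sum>l\<in>mindex_eq d (m-t). (of_nat (m choose t) * x d ^ t) * (multinom d (m-t) l * pmono d l x))"
  proof (intro sum.cong refl)
    fix t l assume t: "t \<in> {..m}" and l: "l \<in> mindex_eq d (m - t)"
    have p1: "(\<Prod>i<d. fact ((l(d:=t)) i)) = (\<Prod>i<d. fact (l i) :: real)" by (intro prod.cong) auto
    have p2: "(\<Prod>i<d. x i ^ (l(d:=t)) i) = (\<Prod>i<d. x i ^ l i)" by (intro prod.cong) auto
    have "multinom (Suc d) m (l(d:=t)) = of_nat (m choose t) * multinom d (m-t) l"
      using t by (simp add: multinom_def prod.lessThan_Suc p1 binomial_fact field_simps)
    moreover have "pmono (Suc d) (l(d:=t)) x = x d ^ t * pmono d l x"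
      by (simp add: pmono_def prod.lessThan_Suc p2)
    ultimately show "multinom (Suc d) m (l(d:=t)) * pmono (Suc d) (l(d:=t)) x = (of_nat (m choose t) * x d ^ t) * (multinom d (m-t) l * pmono d l x)"
      by simp
  qed
  also have "\<dots> = (\<Sum>t\<le>m. of_nat (m choose t) * x d ^ t * (\<Sum>i<d. x i) ^ (m - t))"
    by (simp add: sum_distrib_left[symmetric] Suc.IH)
  also have "\<dots> = (x d + (\<Sum>i<d. x i)) ^ m" by (simp add: binomial_ring)
  finally show ?case by (simp add: add.commute)
qed

definition ff :: "nat \<Rightarrow> nat \<Rightarrow> real" where
  "ff l r = (if r \<le> l then fact l / fact (l - r) else 0)"

lemma falling_multinomial:
  "(\<Sum>l\<in>mindex_eq d m. multinom d m l * (\<Prod>i<d. ff (l i) (r i)) * pmono d l x)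
     = ff m (\<Sum>i<d. r i) * pmono d r x * (\<Sum>i<d. x i) ^ (m - (\<Sum>i<d. r i))"
proof -
  define R where "R = (\<Sum>i<d. r i)"
  define L where "L = {l \<in> mindex_eq d m. \<forall>i<d. r i \<le> l i}"
  have LHS: "(\<Sum>l\<in>mindex_eq d m. multinom d m l * (\<Prod>i<d. ff (l i) (r i)) * pmono d l x)
      = (\<Sum>l\<in>L. multinom d m l * (\<Prod>i<d. ff (l i) (r i)) * pmono d l x)"
  proof (rule sum.mono_neutral_right)
    show "finite (mindex_eq d m)" by (rule finite_mindex_eq)
    show "L \<subseteq> mindex_eq d m" by (auto simp: L_def)
    show "\<forall>l\<in>mindex_eq d m - L. multinom d m l * (\<Prod>i<d. ff (l i) (r i)) * pmono d l x = 0"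
    proof
      fix l assume "l \<in> mindex_eq d m - L"
      then obtain i where "i < d" "\<not> r i \<le> l i" by (auto simp: L_def)
      then have "(\<Prod>i<d. ff (l i) (r i)) = 0" by (intro prod_zero) (auto simp: ff_def)
      then show "multinom d m l * (\<Prod>i<d. ff (l i) (r i)) * pmono d l x = 0" by simp
    qed
  qed
  show ?thesis
  proof (cases "R \<le> m")
    case False
    have "L = {}"
    proof (rule ccontr)
      assume "L \<noteq> {}"
      then obtain l where l: "l \<in> L" by auto
      then have "R \<le> (\<Sum>i<d. l i)" unfolding R_def by (intro sum_mono) (auto simp: L_def)
      then show False using l False by (auto simp: L_def mindex_eq_def)
    qed
    then show ?thesis unfolding LHS R_def[symmetric] using False by (simp add: ff_def)
  next
    case True
    define r0 where "r0 i = (if i < d then r i else 0)" for i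
    have "(\<Sum>l\<in>mindex_eq d (m - R). ff m R * pmono d r x * (multinom d (m - R) l * pmono d l x))
        = (\<Sum>l\<in>L. multinom d m l * (\<Prod>i<d. ff (l i) (r i)) * pmono d l x)"
    proof (rule sum.reindex_bij_witness[where i = "\<lambda>l i. l i - r i" and j = "\<lambda>l i. l i + r0 i"])
      fix a assume a: "a \<in> mindex_eq d (m - R)"
      show "(\<lambda>i. a i + r0 i - r i) = a" using a by (auto simp: r0_def fun_eq_iff mindex_eq_def)
      have "(\<Sum>i<d. a i + r0 i) = (\<Sum>i<d. a i) + R"
        by (simp add: sum.distrib R_def r0_def)
      then show "(\<lambda>i. a i + r0 i) \<in> L" using a True by (auto simp: L_def mindex_eq_def r0_def)
      have f1: "(\<Prod>i<d. ff (a i + r0 i) (r i)) = (\<Prod>i<d. fact (a i + r i) / fact (a i))"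
        by (intro prod.cong) (auto simp: ff_def r0_def)
      have f2: "(\<Prod>i<d. fact (a i + r0 i)) = (\<Prod>i<d. fact (a i + r i) :: real)"
        by (intro prod.cong) (auto simp: r0_def)
      have f3: "pmono d (\<lambda>i. a i + r0 i) x = pmono d r x * pmono d a x"
        unfolding pmono_def prod.distrib[symmetric]
        by (intro prod.cong) (auto simp: r0_def power_add)
      have pp: "(\<Prod>i<d. fact (a i + r i) :: real) > 0" by (auto intro: prod_pos)
      have pa: "(\<Prod>i<d. fact (a i) :: real) > 0" by (auto intro: prod_pos)
      have "multinom d m (\<lambda>i. a i + r0 i) * (\<Prod>i<d. ff (a i + r0 i) (r i))
          = fact m / (\<Prod>i<d. fact (a i))"
        unfolding multinom_def f1 f2 prod_dividef using pp pa by simp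
      also have "\<dots> = ff m R * multinom d (m - R) a"
        using True by (simp add: ff_def multinom_def)
      finally show "multinom d m (\<lambda>i. a i + r0 i) * (\<Prod>i<d. ff ((\<lambda>i. a i + r0 i) i) (r i)) * pmono d (\<lambda>i. a i + r0 i) x
          = ff m R * pmono d r x * (multinom d (m - R) a * pmono d a x)"
        unfolding f3 by simp
    next
      fix b assume b: "b \<in> L"
      show "(\<lambda>i. b i - r i + r0 i) = b" using b by (auto simp: L_def mindex_eq_def r0_def fun_eq_iff)
      have "(\<Sum>i<d. b i - r i) = (\<Sum>i<d. b i) - R"
        unfolding R_def using b by (subst sum_subtractf_nat) (auto simp: L_def)
      then show "(\<lambda>i. b i - r i) \<in> mindex_eq d (m - R)" using b by (auto simp: L_def mindex_eq_def)
    qed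
    note eq = this
    have "(\<Sum>l\<in>mindex_eq d (m - R). ff m R * pmono d r x * (multinom d (m - R) l * pmono d l x)) = ff m R * pmono d r x * (\<Sum>i<d. x i) ^ (m - R)"
      by (simp add: sum_distrib_left[symmetric] multinomial_thm)
    then show ?thesis unfolding LHS R_def[symmetric] eq[symmetric] .
  qed
qed

primrec crise :: "real \<Rightarrow> nat \<Rightarrow> nat \<Rightarrow> real" where
  "crise b 0 r = (if r = 0 then 1 else 0)"
| "crise b (Suc j) r = (if r = 0 then 0 else crise b j (r - 1)) + (real r + b + real j) * crise b j r"

lemma crise_zero: "j < r \<Longrightarrow> crise b j r = 0"
  by (induction j arbitrary: r) auto

lemma crise_diag: "crise b j j = 1"
  by (induction j) (auto simp: crise_zero)

lemma ff_step: "ff l r * real l = ff l (Suc r) + real r * ff l r"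
proof -
  consider "Suc r \<le> l" | "r = l" | "l < r" by linarith
  then show ?thesis
  proof cases
    case 1
    then have "fact (l - r) = real (l - r) * fact (l - Suc r)"
      by (metis Suc_diff_le diff_Suc_Suc fact_Suc of_nat_fact Suc_le_lessD diff_less_Suc)
    moreover have "real (l - r) = real l - real r" using 1 by (auto simp: of_nat_diff)
    ultimately have H: "real l * fact (l - Suc r) = fact (l - r) + real r * fact (l - Suc r)"
      by (simp add: algebra_simps)
    have "fact (l - Suc r) > (0::real)" "fact (l - r) > (0::real)" by simp_all
    then show ?thesis using 1 by (simp add: ff_def field_simps H)
  next
    case 2 then show ?thesis by (simp add: ff_def)
  next
    case 3 then show ?thesis by (simp add: ff_def)
  qed
qed

lemma poch_expand: "pochhammer (b + real l) j = (\<Sum>r\<le>j. crise b j r * ff l r)"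
proof (induction j)
  case 0
  then show ?case by (simp add: ff_def)
next
  case (Suc j)
  have "pochhammer (b + real l) (Suc j) = pochhammer (b + real l) j * (b + real l + real j)"
    by (simp add: pochhammer_rec')
  also have "\<dots> = (\<Sum>r\<le>j. crise b j r * (ff l r * (b + real l + real j)))"
    by (simp add: Suc.IH sum_distrib_left mult_ac)
  also have "\<dots> = (\<Sum>r\<le>j. crise b j r * ff l (Suc r)) + (\<Sum>r\<le>j. (real r + b + real j) * crise b j r * ff l r)"
  proof -
    have st: "\<And>r. crise b j r * (ff l r * (b + real l + real j)) = crise b j r * ff l (Suc r) + (real r + b + real j) * crise b j r * ff l r"
      using ff_step[of l] by (simp add: algebra_simps)
    show ?thesis unfolding st by (simp add: sum.distrib)
  qed
  also have "(\<Sum>r\<le>j. crise b j r * ff l (Suc r)) = (\<Sum>r\<le>Suc j. (if r = 0 then 0 else crise b j (r - 1)) * ff l r)"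
    by (simp only: sum.atMost_Suc_shift) simp
  also have "(\<Sum>r\<le>j. (real r + b + real j) * crise b j r * ff l r) = (\<Sum>r\<le>Suc j. (real r + b + real j) * crise b j r * ff l r)"
    by (simp add: crise_zero)
  finally show ?case by (simp add: sum.distrib[symmetric] algebra_simps)
qed

lemma Fexp:
  "(\<Sum>l\<in>mindex_eq d m. multinom d m l * pmono d l x * (\<Prod>i<d. pochhammer (b + real (l i)) (j i)))
   = (\<Sum>r\<in>mbox d j. (\<Prod>i<d. crise b (j i) (r i)) * (ff m (\<Sum>i<d. r i) * pmono d r x * (\<Sum>i<d. x i) ^ (m - (\<Sum>i<d. r i))))"
proof -
  have P: "(\<Prod>i<d. pochhammer (b + real (l i)) (j i)) = (\<Sum>r\<in>mbox d j. (\<Prod>i<d. crise b (j i) (r i)) * (\<Prod>i<d. ff (l i) (r i)))" for l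
  proof -
    have "(\<Prod>i<d. pochhammer (b + real (l i)) (j i)) = (\<Prod>i<d. \<Sum>t\<le>j i. crise b (j i) t * ff (l i) t)"
      by (simp add: poch_expand)
    also have "\<dots> = (\<Sum>r\<in>mbox d j. \<Prod>i<d. crise b (j i) (r i) * ff (l i) (r i))"
      by (rule prod_sum_mbox)
    finally show ?thesis by (simp add: prod.distrib)
  qed
  have "(\<Sum>l\<in>mindex_eq d m. multinom d m l * pmono d l x * (\<Prod>i<d. pochhammer (b + real (l i)) (j i)))
      = (\<Sum>l\<in>mindex_eq d m. \<Sum>r\<in>mbox d j. (\<Prod>i<d. crise b (j i) (r i)) * (multinom d m l * (\<Prod>i<d. ff (l i) (r i)) * pmono d l x))"
    unfolding P by (simp add: sum_distrib_left mult_ac)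
  also have "\<dots> = (\<Sum>r\<in>mbox d j. (\<Prod>i<d. crise b (j i) (r i)) * (\<Sum>l\<in>mindex_eq d m. multinom d m l * (\<Prod>i<d. ff (l i) (r i)) * pmono d l x))"
    by (subst sum.swap) (simp add: sum_distrib_left)
  finally show ?thesis by (simp add: falling_multinomial)
qed

lemma alt_sum_zero: assumes "N > 0" shows "(\<Sum>m\<le>N. (-1) ^ (N - m) * real (N choose m)) = 0"
proof -
  have "(1 + (-1::real)) ^ N = (\<Sum>m\<le>N. real (N choose m) * 1 ^ m * (-1) ^ (N - m))"
    by (rule binomial_ring)
  moreover have "(\<Sum>m\<le>N. (-1) ^ (N - m) * real (N choose m)) = (\<Sum>m\<le>N. real (N choose m) * 1 ^ m * (-1) ^ (N - m))"
    by (simp add: mult.commute)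
  moreover have "(1 + (-1::real)) ^ N = 0" using assms by simp
  ultimately show ?thesis by simp
qed

lemma absorb:
  assumes "s \<le> n"
  shows "(\<Sum>m\<le>n. (-1) ^ (n - m) * real (n choose m) * ff m s * h m)
       = ff n s * (\<Sum>m\<le>n - s. (-1) ^ (n - s - m) * real ((n - s) choose m) * h (m + s))"
proof -
  have "(\<Sum>m\<le>n. (-1) ^ (n - m) * real (n choose m) * ff m s * h m)
      = (\<Sum>m\<in>{s..n}. (-1) ^ (n - m) * real (n choose m) * ff m s * h m)"
    by (rule sum.mono_neutral_right) (auto simp: ff_def)
  also have "\<dots> = (\<Sum>m\<le>n - s. (-1) ^ (n - (m + s)) * real (n choose (m + s)) * ff (m + s) s * h (m + s))"
  proof (rule sum.reindex_bij_witness[where i = "\<lambda>m. m + s" and j = "\<lambda>m. m - s"])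
  qed (use assms in auto)
  also have "\<dots> = (\<Sum>m\<le>n - s. ff n s * ((-1) ^ (n - s - m) * real ((n - s) choose m) * h (m + s)))"
  proof (intro sum.cong refl)
    fix m assume m: "m \<in> {..n - s}"
    have e1: "n - (m + s) = n - s - m" by simp
    have "real (n choose (m + s)) * ff (m + s) s = ff n s * real ((n - s) choose m)"
    proof -
      have "real (n choose (m + s)) = fact n / (fact (m + s) * fact (n - (m + s)))"
        using m assms by (intro binomial_fact) auto
      moreover have "real ((n - s) choose m) = fact (n - s) / (fact m * fact (n - s - m))"
        using m by (intro binomial_fact) auto
      moreover have "ff (m + s) s = fact (m + s) / fact m" by (simp add: ff_def)
      moreover have "ff n s = fact n / fact (n - s)" using assms by (simp add: ff_def)
      moreover have "\<And>A B C D. (B::real) \<noteq> 0 \<Longrightarrow> A / (B * C) * (B / D) = A / (D * C)" by simp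
      moreover have "\<And>A B C D. (B::real) \<noteq> 0 \<Longrightarrow> A / B * (B / (C * D)) = A / (C * D)" by simp
      ultimately show ?thesis using e1 by simp

    qed
    then show "(-1) ^ (n - (m + s)) * real (n choose (m + s)) * ff (m + s) s * h (m + s)
        = ff n s * ((-1) ^ (n - s - m) * real ((n - s) choose m) * h (m + s))"
      by (simp add: e1 mult_ac)
  qed
  finally show ?thesis by (simp add: sum_distrib_left)
qed

lemma alt_ff: assumes "r < N" shows "(\<Sum>m\<le>N. (-1) ^ (N - m) * real (N choose m) * ff m r) = 0"
proof -
  have "(\<Sum>m\<le>N. (-1) ^ (N - m) * real (N choose m) * ff m r) = (\<Sum>m\<le>N. (-1) ^ (N - m) * real (N choose m) * ff m r * 1)"
    by simp
  also have "\<dots> = ff N r * (\<Sum>m\<le>N - r. (-1) ^ (N - r - m) * real ((N - r) choose m) * 1)"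
    by (rule absorb) (use assms in simp)
  also have "\<dots> = 0" using alt_sum_zero[of "N - r"] assms by simp
  finally show ?thesis .
qed

lemma alt_poch: assumes "t < N"
  shows "(\<Sum>m\<le>N. (-1) ^ (N - m) * real (N choose m) * pochhammer (c + real m) t) = 0"
proof -
  have "(\<Sum>m\<le>N. (-1) ^ (N - m) * real (N choose m) * pochhammer (c + real m) t)
      = (\<Sum>m\<le>N. \<Sum>r\<le>t. crise c t r * ((-1) ^ (N - m) * real (N choose m) * ff m r))"
    by (simp add: poch_expand sum_distrib_left mult_ac)
  also have "\<dots> = (\<Sum>r\<le>t. crise c t r * (\<Sum>m\<le>N. (-1) ^ (N - m) * real (N choose m) * ff m r))"
    by (subst sum.swap) (simp add: sum_distrib_left)
  also have "\<dots> = 0" using assms by (simp add: alt_ff)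
  finally show ?thesis .
qed

definition Scoef :: "real \<Rightarrow> nat \<Rightarrow> nat \<Rightarrow> nat \<Rightarrow> real" where
  "Scoef \<theta> n s k = (\<Sum>m\<le>n. a_coef \<theta> n m * ff m s / pochhammer (\<theta> + real m) k)"

lemma a_coef_alt: assumes "1 \<le> n" "m \<le> n"
  shows "a_coef \<theta> n m = (\<theta> + 2 * real n - 1) / fact n * ((-1) ^ (n - m) * real (n choose m)) * pochhammer (\<theta> + real m) (n - 1)"
proof -
  have n0: "n \<noteq> 0" using assms by simp
  have b: "real (n choose m) = fact n / (fact m * fact (n - m))" using assms by (intro binomial_fact)
  have ab: "\<And>T s P A B F. (F::real) \<noteq> 0 \<Longrightarrow> T * s * P / (A * B) = T / F * (s * (F / (A * B))) * P" by simp
  have "a_coef \<theta> n m = (\<theta> + 2 * real n - 1) * (-1) ^ (n - m) * pochhammer (\<theta> + real m) (n - 1) / (fact m * fact (n - m))"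
    using n0 by (simp add: a_coef_def)
  also have "\<dots> = (\<theta> + 2 * real n - 1) / fact n * ((-1) ^ (n - m) * (fact n / (fact m * fact (n - m)))) * pochhammer (\<theta> + real m) (n - 1)"
    by (rule ab) simp
  finally show ?thesis unfolding b .
qed

lemma Scoef_zero: assumes th: "\<theta> > 0" and "s \<le> k" "k < n" shows "Scoef \<theta> n s k = 0"
proof -
  define t where "t = n - 1 - k"
  define C where "C = (\<theta> + 2 * real n - 1) / fact n"
  have n1: "1 \<le> n" using assms by simp
  have "Scoef \<theta> n s k = (\<Sum>m\<le>n. C * ((-1) ^ (n - m) * real (n choose m) * ff m s * pochhammer ((\<theta> + real k) + real m) t))"
    unfolding Scoef_def
  proof (intro sum.cong refl)
    fix m assume m: "m \<in> {..n}"
    have "pochhammer (\<theta> + real m) (n - 1) = pochhammer (\<theta> + real m) k * pochhammer (\<theta> + real m + real k) t"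
      unfolding t_def using assms pochhammer_product'[of "\<theta> + real m" k "n - 1 - k"] by simp
    note pp = this
    have p0: "pochhammer (\<theta> + real m) k > 0" using th by (intro pochhammer_pos) simp
    show "a_coef \<theta> n m * ff m s / pochhammer (\<theta> + real m) k
       = C * ((-1) ^ (n - m) * real (n choose m) * ff m s * pochhammer ((\<theta> + real k) + real m) t)"
    proof -
      have ab: "\<And>C s1 s2 f p q. (p::real) \<noteq> 0 \<Longrightarrow> C * (s1 * s2) * (p * q) * f / p = C * (s1 * s2 * f * q)" by simp
      have e: "\<theta> + real m + real k = \<theta> + real k + real m" by simp
      have mn: "m \<le> n" using m by simp
      show ?thesis unfolding a_coef_alt[OF n1 mn] pp C_def[symmetric] e by (rule ab) (use p0 in simp)
    qed
  qed
  also have "\<dots> = C * (\<Sum>m\<le>n. (-1) ^ (n - m) * real (n choose m) * ff m s * pochhammer ((\<theta> + real k) + real m) t)"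
    by (simp add: sum_distrib_left)
  also have "(\<Sum>m\<le>n. (-1) ^ (n - m) * real (n choose m) * ff m s * pochhammer ((\<theta> + real k) + real m) t)
      = ff n s * (\<Sum>m\<le>n - s. (-1) ^ (n - s - m) * real ((n - s) choose m) * pochhammer ((\<theta> + real k) + real (m + s)) t)"
    by (rule absorb) (use assms in simp)
  also have "(\<Sum>m\<le>n - s. (-1) ^ (n - s - m) * real ((n - s) choose m) * pochhammer ((\<theta> + real k) + real (m + s)) t)
      = (\<Sum>m\<le>n - s. (-1) ^ (n - s - m) * real ((n - s) choose m) * pochhammer ((\<theta> + real k + real s) + real m) t)"
    by (simp add: add_ac)
  also have "\<dots> = 0" by (rule alt_poch) (use assms in \<open>simp add: t_def\<close>)
  finally show ?thesis by simp
qed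

lemma Scoef_diag: assumes th: "\<theta> > 0" shows "Scoef \<theta> n n n = 1"
proof -
  have "Scoef \<theta> n n n = (\<Sum>m\<in>{n}. a_coef \<theta> n m * ff m n / pochhammer (\<theta> + real m) n)"
    unfolding Scoef_def by (rule sum.mono_neutral_right) (auto simp: ff_def)
  also have "\<dots> = a_coef \<theta> n n * fact n / pochhammer (\<theta> + real n) n" by (simp add: ff_def)
  also have "\<dots> = 1"
  proof (cases n)
    case 0 then show ?thesis by (simp add: a_coef_def)
  next
    case (Suc k)
    have p: "pochhammer (\<theta> + real n) n = pochhammer (\<theta> + real n) k * (\<theta> + real n + real k)"
      by (simp add: Suc pochhammer_rec')
    have p0: "pochhammer (\<theta> + real n) k > 0" using th by (intro pochhammer_pos) simp
    have q: "\<theta> + real n + real k > 0" using th by simp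
    have "a_coef \<theta> n n = (\<theta> + 2 * real n - 1) * pochhammer (\<theta> + real n) k / fact n"
      by (simp add: a_coef_def Suc)
    moreover have "\<theta> + 2 * real n - 1 = \<theta> + real n + real k" by (simp add: Suc)
    ultimately show ?thesis using p0 q by (simp add: p)
  qed
  finally show ?thesis .
qed

lemma Bnd_const: "Bnd d (\<lambda>x. c)"
  unfolding Bnd_def by auto

lemma Bnd_pmono: "Bnd d (pmono d l)"
proof -
  have "(\<lambda>u. pmono d l (dlift d u)) \<in> borel_measurable (dleb d)"
    unfolding pmono_def by measurable
  moreover have "\<forall>x\<in>dsimplex d. \<bar>pmono d l x\<bar> \<le> 1"
  proof
    fix x assume x: "x \<in> dsimplex d"
    have "(\<Prod>i<d. x i ^ l i) \<ge> 0" using simplex_le1[OF x] by (auto intro!: prod_nonneg)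
    then have "\<bar>pmono d l x\<bar> = (\<Prod>i<d. x i ^ l i)" unfolding pmono_def by simp
    also have "\<dots> \<le> 1" using simplex_le1[OF x] by (auto intro!: prod_le_1 power_le_one)
    finally show "\<bar>pmono d l x\<bar> \<le> 1" .
  qed
  ultimately show ?thesis unfolding Bnd_def by blast
qed

lemma Bnd_add: "Bnd d f \<Longrightarrow> Bnd d g \<Longrightarrow> Bnd d (\<lambda>x. f x + g x)"
proof -
  assume f: "Bnd d f" and g: "Bnd d g"
  then obtain C1 C2 where C1: "\<forall>x\<in>dsimplex d. \<bar>f x\<bar> \<le> C1" and C2: "\<forall>x\<in>dsimplex d. \<bar>g x\<bar> \<le> C2"
    and m: "(\<lambda>u. f (dlift d u)) \<in> borel_measurable (dleb d)" "(\<lambda>u. g (dlift d u)) \<in> borel_measurable (dleb d)"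
    by (auto simp: Bnd_def)
  have "\<forall>x\<in>dsimplex d. \<bar>f x + g x\<bar> \<le> C1 + C2"
  proof
    fix x assume "x \<in> dsimplex d"
    then have "\<bar>f x\<bar> \<le> C1" "\<bar>g x\<bar> \<le> C2" using C1 C2 by auto
    then show "\<bar>f x + g x\<bar> \<le> C1 + C2" by (meson abs_triangle_ineq add_mono order_trans)
  qed
  moreover have "(\<lambda>u. f (dlift d u) + g (dlift d u)) \<in> borel_measurable (dleb d)" using m by measurable
  ultimately show ?thesis unfolding Bnd_def by blast
qed

lemma Bnd_mult: "Bnd d f \<Longrightarrow> Bnd d g \<Longrightarrow> Bnd d (\<lambda>x. f x * g x)"
proof -
  assume f: "Bnd d f" and g: "Bnd d g"
  then obtain C1 C2 where C1: "\<forall>x\<in>dsimplex d. \<bar>f x\<bar> \<le> C1" and C2: "\<forall>x\<in>dsimplex d. \<bar>g x\<bar> \<le> C2"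
    and m: "(\<lambda>u. f (dlift d u)) \<in> borel_measurable (dleb d)" "(\<lambda>u. g (dlift d u)) \<in> borel_measurable (dleb d)"
    by (auto simp: Bnd_def)
  have "\<forall>x\<in>dsimplex d. \<bar>f x * g x\<bar> \<le> C1 * C2"
  proof
    fix x assume "x \<in> dsimplex d"
    then have "\<bar>f x\<bar> \<le> C1" "\<bar>g x\<bar> \<le> C2" using C1 C2 by auto
    then show "\<bar>f x * g x\<bar> \<le> C1 * C2" by (simp add: abs_mult mult_mono')
  qed
  moreover have "(\<lambda>u. f (dlift d u) * g (dlift d u)) \<in> borel_measurable (dleb d)" using m by measurable
  ultimately show ?thesis unfolding Bnd_def by blast
qed

lemma Bnd_sum: "finite I \<Longrightarrow> (\<And>i. i \<in> I \<Longrightarrow> Bnd d (f i)) \<Longrightarrow> Bnd d (\<lambda>x. \<Sum>i\<in>I. f i x)"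
proof (induction I rule: finite_induct)
  case empty then show ?case by (simp add: Bnd_const)
next
  case (insert a I)
  then show ?case by (simp add: Bnd_add)
qed

lemma Bnd_cmult: "Bnd d f \<Longrightarrow> Bnd d (\<lambda>x. c * f x)"
  using Bnd_mult[OF Bnd_const] .

lemma Bnd_diff: "Bnd d f \<Longrightarrow> Bnd d g \<Longrightarrow> Bnd d (\<lambda>x. f x - g x)"
  using Bnd_add[of d f "\<lambda>x. (-1) * g x"] Bnd_cmult[of d g "-1"] by simp

lemma Bnd_polys: "f \<in> polys d n \<Longrightarrow> Bnd d f"
  unfolding polys_def using Bnd_sum[OF finite_mindex_le] Bnd_cmult Bnd_pmono by auto

lemma pmono_add: "pmono d a x * pmono d b x = pmono d (\<lambda>i. a i + b i) x"
  unfolding pmono_def by (simp add: prod.distrib[symmetric] power_add)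

lemma pmono_perm: assumes "\<tau> permutes {..<d}"
  shows "pmono d l (perm_act \<tau> x) = pmono d (l \<circ> inv \<tau>) x"
proof -
  have "pmono d l (perm_act \<tau> x) = (\<Prod>i<d. x (\<tau> i) ^ l i)" by (simp add: pmono_def perm_act_def)
  also have "\<dots> = (\<Prod>i<d. x (\<tau> (inv \<tau> i)) ^ l (inv \<tau> i))"
    using prod.permute[OF permutes_inv[OF assms], of "\<lambda>i. x (\<tau> i) ^ l i"] by (simp add: comp_def)
  also have "\<dots> = pmono d (l \<circ> inv \<tau>) x"
    using permutes_inverses(1)[OF assms] by (simp add: pmono_def)
  finally show ?thesis .
qed

lemma polys_sum_gen:
  assumes "finite I" "\<And>i. i \<in> I \<Longrightarrow> \<rho> i \<in> mindex_le d N"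
  shows "(\<lambda>x. \<Sum>i\<in>I. w i * pmono d (\<rho> i) x) \<in> polys d N"
proof -
  define c where "c l = (\<Sum>i\<in>{i\<in>I. \<rho> i = l}. w i)" for l
  have "(\<lambda>x. \<Sum>i\<in>I. w i * pmono d (\<rho> i) x) = (\<lambda>x. \<Sum>l\<in>mindex_le d N. c l * pmono d l x)"
  proof
    fix x
    have "(\<Sum>l\<in>mindex_le d N. c l * pmono d l x) = (\<Sum>l\<in>mindex_le d N. \<Sum>i\<in>{i\<in>I. \<rho> i = l}. w i * pmono d (\<rho> i) x)"
      unfolding c_def sum_distrib_right by (intro sum.cong refl) auto
    also have "\<dots> = (\<Sum>i\<in>I. w i * pmono d (\<rho> i) x)"
      by (rule sum.group) (use assms finite_mindex_le in auto)
    finally show "(\<Sum>i\<in>I. w i * pmono d (\<rho> i) x) = (\<Sum>l\<in>mindex_le d N. c l * pmono d l x)" ..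
  qed
  then show ?thesis unfolding polys_def by blast
qed

lemma polys_finsum:
  assumes "finite I" "\<And>i. i \<in> I \<Longrightarrow> f i \<in> polys d N"
  shows "(\<lambda>x. \<Sum>i\<in>I. f i x) \<in> polys d N"
proof -
  have "\<forall>i\<in>I. \<exists>c. f i = (\<lambda>x. \<Sum>l\<in>mindex_le d N. c l * pmono d l x)" using assms(2) by (auto simp: polys_def)
  then obtain C where C: "\<forall>i\<in>I. f i = (\<lambda>x. \<Sum>l\<in>mindex_le d N. C i l * pmono d l x)" by metis
  have "(\<lambda>x. \<Sum>i\<in>I. f i x) = (\<lambda>x. \<Sum>l\<in>mindex_le d N. (\<Sum>i\<in>I. C i l) * pmono d l x)"
  proof
    fix x
    have "(\<Sum>i\<in>I. f i x) = (\<Sum>i\<in>I. \<Sum>l\<in>mindex_le d N. C i l * pmono d l x)" using C by simp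
    also have "\<dots> = (\<Sum>l\<in>mindex_le d N. (\<Sum>i\<in>I. C i l) * pmono d l x)"
      by (subst sum.swap) (simp add: sum_distrib_right)
    finally show "(\<Sum>i\<in>I. f i x) = (\<Sum>l\<in>mindex_le d N. (\<Sum>i\<in>I. C i l) * pmono d l x)" .
  qed
  then show ?thesis unfolding polys_def mem_Collect_eq by (intro exI[where x = "\<lambda>l. \<Sum>i\<in>I. C i l"])
qed

lemma polys_cmult: "f \<in> polys d N \<Longrightarrow> (\<lambda>x. c * f x) \<in> polys d N"
proof -
  assume "f \<in> polys d N"
  then obtain C where "f = (\<lambda>x. \<Sum>l\<in>mindex_le d N. C l * pmono d l x)" by (auto simp: polys_def)
  then have "(\<lambda>x. c * f x) = (\<lambda>x. \<Sum>l\<in>mindex_le d N. (c * C l) * pmono d l x)"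
    by (simp add: sum_distrib_left mult_ac)
  then show ?thesis unfolding polys_def mem_Collect_eq by (intro exI[where x = "\<lambda>l. c * C l"])
qed

lemma polys_add: "f \<in> polys d N \<Longrightarrow> g \<in> polys d N \<Longrightarrow> (\<lambda>x. f x + g x) \<in> polys d N"
  using polys_finsum[of "{0::nat,1}" "\<lambda>i. if i = 0 then f else g" d N] by simp

lemma polys_diff: "f \<in> polys d N \<Longrightarrow> g \<in> polys d N \<Longrightarrow> (\<lambda>x. f x - g x) \<in> polys d N"
  using polys_add[of f d N "\<lambda>x. (-1) * g x"] polys_cmult[of g d N "-1"] by simp

lemma polys_mono: "N \<le> N' \<Longrightarrow> f \<in> polys d N \<Longrightarrow> f \<in> polys d N'"
proof -
  assume NN: "N \<le> N'" and "f \<in> polys d N"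
  then obtain C where C: "f = (\<lambda>x. \<Sum>l\<in>mindex_le d N. C l * pmono d l x)" by (auto simp: polys_def)
  have "f = (\<lambda>x. \<Sum>l\<in>mindex_le d N. C l * pmono d (id l) x)" using C by simp
  moreover have "(\<lambda>x. \<Sum>l\<in>mindex_le d N. C l * pmono d (id l) x) \<in> polys d N'"
    by (rule polys_sum_gen) (use NN finite_mindex_le in \<open>auto simp: mindex_le_def\<close>)
  ultimately show ?thesis by simp
qed

lemma polys_pmono: "l \<in> mindex_le d N \<Longrightarrow> pmono d l \<in> polys d N"
  using polys_sum_gen[of "{l}" "\<lambda>_. l" d N "\<lambda>_. 1"] by simp

lemma polys_perm: assumes "\<tau> permutes {..<d}" "f \<in> polys d N"
  shows "(\<lambda>x. f (perm_act \<tau> x)) \<in> polys d N"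
proof -
  obtain C where C: "f = (\<lambda>x. \<Sum>l\<in>mindex_le d N. C l * pmono d l x)" using assms(2) by (auto simp: polys_def)
  have "(\<lambda>x. f (perm_act \<tau> x)) = (\<lambda>x. \<Sum>l\<in>mindex_le d N. C l * pmono d (l \<circ> inv \<tau>) x)"
    using C pmono_perm[OF assms(1)] by simp
  moreover have "\<dots> \<in> polys d N"
  proof (rule polys_sum_gen)
    fix l assume l: "l \<in> mindex_le d N"
    have i1: "\<And>i. d \<le> i \<Longrightarrow> inv \<tau> i = i" using permutes_inv[OF assms(1)] by (simp add: permutes_def)
    have "(\<Sum>i<d. (l \<circ> inv \<tau>) i) = (\<Sum>i<d. l i)"
      using sum.permute[OF permutes_inv[OF assms(1)], of l] by simp
    then show "l \<circ> inv \<tau> \<in> mindex_le d N" using l i1 by (auto simp: mindex_le_def)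
  qed (rule finite_mindex_le)
  ultimately show ?thesis by simp
qed

locale mset =
  fixes \<theta> :: real and d :: nat
  assumes th: "\<theta> > 0" and d2: "2 \<le> d"
begin

lemma d1: "1 \<le> d" using d2 by simp
lemma dpos: "real d > 0" using d2 by simp
lemma bpos: "\<theta> / real d > 0" using th dpos by simp

sublocale dset d "symparam \<theta> d"
  by unfold_locales (use bpos d1 in \<open>auto simp: symparam_def\<close>)

definition Mom :: "(nat \<Rightarrow> nat) \<Rightarrow> real" where
  "Mom l = (\<Prod>i<d. pochhammer (\<theta> / real d) (l i)) / pochhammer \<theta> (\<Sum>i<d. l i)"

lemma sum_beta: "(\<Sum>i<d. symparam \<theta> d i) = \<theta>"
  using dpos by (simp add: symparam_def)

lemma E_pm: "E (pmono d l) = Mom l"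
  unfolding E_pmono sum_beta Mom_def by (simp add: symparam_def)

lemma Mom_pos: "Mom l > 0"
  unfolding Mom_def using bpos th by (auto intro!: divide_pos_pos prod_pos pochhammer_pos)

lemma Mom_perm: assumes "\<tau> permutes {..<d}" shows "Mom (l \<circ> \<tau>) = Mom l"
proof -
  have "(\<Prod>i<d. pochhammer (\<theta> / real d) ((l \<circ> \<tau>) i)) = (\<Prod>i<d. pochhammer (\<theta> / real d) (l i))"
    using prod.permute[OF assms, of "\<lambda>i. pochhammer (\<theta> / real d) (l i)"] by (simp add: comp_def)
  moreover have "(\<Sum>i<d. (l \<circ> \<tau>) i) = (\<Sum>i<d. l i)"
    using sum.permute[OF assms, of l] by simp
  ultimately show ?thesis unfolding Mom_def by simp
qed

lemma multinom_pos: "multinom d m l > 0"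
  unfolding multinom_def by (auto intro!: divide_pos_pos prod_pos)

lemma DM_eq: assumes "l \<in> mindex_eq d m" shows "DM d (symparam \<theta> d) l m = multinom d m l * Mom l"
  using assms unfolding DM_def Mom_def sum_beta mindex_eq_def by (simp add: symparam_def)

definition wgt :: "(nat \<Rightarrow> nat) \<Rightarrow> nat \<Rightarrow> real" where
  "wgt l m = multinom d m l / Mom l"

lemma xi_alt: "xi \<theta> d m x y = (\<Sum>l\<in>mindex_eq d m. wgt l m * pmono d l x * pmono d l y)"
  unfolding xi_def
proof (intro sum.cong refl)
  fix l assume l: "l \<in> mindex_eq d m"
  have "multinom d m l > 0" "Mom l > 0" by (rule multinom_pos, rule Mom_pos)
  then show "(multinom d m l)\<^sup>2 * pmono d l x * pmono d l y / DM d (symparam \<theta> d) l m = wgt l m * pmono d l x * pmono d l y"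
    unfolding DM_eq[OF l] wgt_def by (simp add: power2_eq_square)
qed

lemma Mom_ratio:
  "Mom (\<lambda>i. l i + j i) = Mom l * (\<Prod>i<d. pochhammer (\<theta> / real d + real (l i)) (j i)) / pochhammer (\<theta> + real (\<Sum>i<d. l i)) (\<Sum>i<d. j i)"
proof -
  have p1: "(\<Prod>i<d. pochhammer (\<theta> / real d) (l i + j i)) = (\<Prod>i<d. pochhammer (\<theta> / real d) (l i)) * (\<Prod>i<d. pochhammer (\<theta> / real d + real (l i)) (j i))"
    by (simp add: pochhammer_product' prod.distrib)
  have p2: "pochhammer \<theta> (\<Sum>i<d. l i + j i) = pochhammer \<theta> (\<Sum>i<d. l i) * pochhammer (\<theta> + real (\<Sum>i<d. l i)) (\<Sum>i<d. j i)"
    by (simp add: sum.distrib pochhammer_product')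
  have a: "pochhammer \<theta> (\<Sum>i<d. l i) > 0" "pochhammer (\<theta> + real (\<Sum>i<d. l i)) (\<Sum>i<d. j i) > 0"
  proof -
    have "\<theta> + real (\<Sum>i<d. l i) > 0" using th by (metis add_pos_nonneg of_nat_0_le_iff)
    then show "pochhammer \<theta> (\<Sum>i<d. l i) > 0" "pochhammer (\<theta> + real (\<Sum>i<d. l i)) (\<Sum>i<d. j i) > 0"
      using th by (auto intro: pochhammer_pos simp del: of_nat_sum)
  qed
  show ?thesis unfolding Mom_def p1 p2 using a by simp
qed

definition GI :: "nat \<Rightarrow> (nat \<times> (nat \<Rightarrow> nat)) set" where
  "GI n = Sigma {..n} (\<lambda>m. mindex_eq d m)"

lemma finite_GI: "finite (GI n)"
  unfolding GI_def by (auto intro!: finite_SigmaI finite_mindex_eq)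

definition G :: "nat \<Rightarrow> (nat \<Rightarrow> real) \<Rightarrow> (nat \<Rightarrow> real) \<Rightarrow> real" where
  "G n x y = (\<Sum>m\<le>n. a_coef \<theta> n m * xi \<theta> d m x y)"

definition gc :: "nat \<Rightarrow> (nat \<Rightarrow> real) \<Rightarrow> nat \<times> (nat \<Rightarrow> nat) \<Rightarrow> real" where
  "gc n x p = a_coef \<theta> n (fst p) * wgt (snd p) (fst p) * pmono d (snd p) x"

lemma G_alt: "G n x y = (\<Sum>p\<in>GI n. gc n x p * pmono d (snd p) y)"
proof -
  have "G n x y = (\<Sum>m\<le>n. \<Sum>l\<in>mindex_eq d m. a_coef \<theta> n m * wgt l m * pmono d l x * pmono d l y)"
    unfolding G_def xi_alt by (simp add: sum_distrib_left mult_ac)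
  also have "\<dots> = (\<Sum>(m,l)\<in>GI n. a_coef \<theta> n m * wgt l m * pmono d l x * pmono d l y)"
    unfolding GI_def by (rule sum.Sigma) (auto simp: finite_mindex_eq)
  also have "\<dots> = (\<Sum>p\<in>GI n. gc n x p * pmono d (snd p) y)"
    by (intro sum.cong refl) (auto simp: gc_def)
  finally show ?thesis .
qed

lemma Bnd_G: "Bnd d (G n x)"
  unfolding G_alt[abs_def] by (intro Bnd_sum finite_GI Bnd_cmult Bnd_pmono)

lemma GI_le: "p \<in> GI n \<Longrightarrow> snd p \<in> mindex_le d n"
  unfolding GI_def using mindex_eq_le by (cases p) auto

lemma G_polys: "G n x \<in> polys d n"
  unfolding G_alt[abs_def] by (rule polys_sum_gen[OF finite_GI GI_le])

definition Aop :: "nat \<Rightarrow> ((nat \<Rightarrow> real) \<Rightarrow> real) \<Rightarrow> (nat \<Rightarrow> real) \<Rightarrow> real" where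
  "Aop n f x = E (\<lambda>y. G n x y * f y)"

lemma Aop_formula: assumes "Bnd d f"
  shows "Aop n f x = (\<Sum>p\<in>GI n. gc n x p * E (\<lambda>y. pmono d (snd p) y * f y))"
proof -
  have "Aop n f x = E (\<lambda>y. \<Sum>p\<in>GI n. gc n x p * (pmono d (snd p) y * f y))"
    unfolding Aop_def G_alt sum_distrib_right by (simp add: mult_ac)
  also have "\<dots> = (\<Sum>p\<in>GI n. E (\<lambda>y. gc n x p * (pmono d (snd p) y * f y)))"
    by (rule E_sum[OF finite_GI]) (intro Bnd_cmult Bnd_mult Bnd_pmono assms)
  also have "\<dots> = (\<Sum>p\<in>GI n. gc n x p * E (\<lambda>y. pmono d (snd p) y * f y))"
    by (simp add: E_cmult)
  finally show ?thesis .
qed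

lemma Aop_polys: assumes "Bnd d f" shows "Aop n f \<in> polys d n"
proof -
  have "Aop n f = (\<lambda>x. \<Sum>p\<in>GI n. (a_coef \<theta> n (fst p) * wgt (snd p) (fst p) * E (\<lambda>y. pmono d (snd p) y * f y)) * pmono d (snd p) x)"
    by (rule ext) (simp add: Aop_formula[OF assms] gc_def mult_ac)
  also have "\<dots> \<in> polys d n" by (rule polys_sum_gen[OF finite_GI GI_le])
  finally show ?thesis .
qed

lemma Bnd_Aop: assumes "Bnd d f" shows "Bnd d (Aop n f)"
  using Bnd_polys[OF Aop_polys[OF assms]] .

lemma Aop_sym: assumes "Bnd d f" "Bnd d g"
  shows "E (\<lambda>z. Aop n f z * g z) = (\<Sum>p\<in>GI n. a_coef \<theta> n (fst p) * wgt (snd p) (fst p) *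
           E (\<lambda>y. pmono d (snd p) y * f y) * E (\<lambda>y. pmono d (snd p) y * g y))"
proof -
  have "E (\<lambda>z. Aop n f z * g z) = E (\<lambda>z. \<Sum>p\<in>GI n. (a_coef \<theta> n (fst p) * wgt (snd p) (fst p) * E (\<lambda>y. pmono d (snd p) y * f y)) * (pmono d (snd p) z * g z))"
    unfolding Aop_formula[OF assms(1)] sum_distrib_right by (simp add: gc_def mult_ac)
  also have "\<dots> = (\<Sum>p\<in>GI n. E (\<lambda>z. (a_coef \<theta> n (fst p) * wgt (snd p) (fst p) * E (\<lambda>y. pmono d (snd p) y * f y)) * (pmono d (snd p) z * g z)))"
    by (rule E_sum[OF finite_GI]) (intro Bnd_cmult Bnd_mult Bnd_pmono assms)
  also have "\<dots> = (\<Sum>p\<in>GI n. a_coef \<theta> n (fst p) * wgt (snd p) (fst p) *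
           E (\<lambda>y. pmono d (snd p) y * f y) * E (\<lambda>y. pmono d (snd p) y * g y))"
    by (simp add: E_cmult)
  finally show ?thesis .
qed

lemma Aop_swap: assumes "Bnd d f" "Bnd d g"
  shows "E (\<lambda>z. Aop n f z * g z) = E (\<lambda>z. Aop n g z * f z)"
  unfolding Aop_sym[OF assms] Aop_sym[OF assms(2,1)] by (simp add: mult_ac)

end

context mset
begin

definition Cr :: "(nat \<Rightarrow> nat) \<Rightarrow> (nat \<Rightarrow> nat) \<Rightarrow> real" where
  "Cr j r = (\<Prod>i<d. crise (\<theta> / real d) (j i) (r i))"

lemma Aop_pmono:
  assumes j: "j \<in> mindex_eq d k" and x: "x \<in> dsimplex d"
  shows "Aop n (pmono d j) x = (\<Sum>r\<in>mbox d j. Cr j r * Scoef \<theta> n (\<Sum>i<d. r i) k * pmono d r x)"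
proof -
  have sj: "(\<Sum>i<d. j i) = k" using j by (simp add: mindex_eq_def)
  have sx: "(\<Sum>i<d. x i) = 1" using x by (simp add: dsimplex_def)
  have "Aop n (pmono d j) x = (\<Sum>p\<in>GI n. gc n x p * Mom (\<lambda>i. snd p i + j i))"
    unfolding Aop_formula[OF Bnd_pmono] pmono_add E_pm ..
  also have "\<dots> = (\<Sum>(m,l)\<in>GI n. a_coef \<theta> n m * wgt l m * pmono d l x * Mom (\<lambda>i. l i + j i))"
    by (intro sum.cong refl) (auto simp: gc_def)
  also have "\<dots> = (\<Sum>m\<le>n. \<Sum>l\<in>mindex_eq d m. a_coef \<theta> n m * wgt l m * pmono d l x * Mom (\<lambda>i. l i + j i))"
    unfolding GI_def by (rule sum.Sigma[symmetric]) (auto simp: finite_mindex_eq)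
  also have "\<dots> = (\<Sum>m\<le>n. a_coef \<theta> n m / pochhammer (\<theta> + real m) k *
        (\<Sum>l\<in>mindex_eq d m. multinom d m l * pmono d l x * (\<Prod>i<d. pochhammer (\<theta> / real d + real (l i)) (j i))))"
  proof (intro sum.cong refl)
    fix m assume m: "m \<in> {..n}"
    show "(\<Sum>l\<in>mindex_eq d m. a_coef \<theta> n m * wgt l m * pmono d l x * Mom (\<lambda>i. l i + j i))
       = a_coef \<theta> n m / pochhammer (\<theta> + real m) k *
        (\<Sum>l\<in>mindex_eq d m. multinom d m l * pmono d l x * (\<Prod>i<d. pochhammer (\<theta> / real d + real (l i)) (j i)))"
      unfolding sum_distrib_left
    proof (intro sum.cong refl)
      fix l assume l: "l \<in> mindex_eq d m"
      have sl: "(\<Sum>i<d. l i) = m" using l by (simp add: mindex_eq_def)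
      have mp: "Mom l > 0" by (rule Mom_pos)
      show "a_coef \<theta> n m * wgt l m * pmono d l x * Mom (\<lambda>i. l i + j i)
         = a_coef \<theta> n m / pochhammer (\<theta> + real m) k * (multinom d m l * pmono d l x * (\<Prod>i<d. pochhammer (\<theta> / real d + real (l i)) (j i)))"
        unfolding Mom_ratio sl sj wgt_def using mp by simp
    qed
  qed
  also have "\<dots> = (\<Sum>m\<le>n. a_coef \<theta> n m / pochhammer (\<theta> + real m) k *
        (\<Sum>r\<in>mbox d j. Cr j r * (ff m (\<Sum>i<d. r i) * pmono d r x)))"
    unfolding Fexp sx Cr_def by simp
  also have "\<dots> = (\<Sum>r\<in>mbox d j. Cr j r * (\<Sum>m\<le>n. a_coef \<theta> n m * ff m (\<Sum>i<d. r i) / pochhammer (\<theta> + real m) k) * pmono d r x)"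
    unfolding sum_distrib_left sum_distrib_right
    by (subst sum.swap) (simp add: mult_ac)
  finally show ?thesis unfolding Scoef_def .
qed

lemma mbox_sum_le: "r \<in> mbox d j \<Longrightarrow> (\<Sum>i<d. r i) \<le> (\<Sum>i<d. j i)"
  by (intro sum_mono) (auto simp: mbox_def)

lemma Aop_low: assumes j: "j \<in> mindex_eq d k" and kn: "k < n" and x: "x \<in> dsimplex d"
  shows "Aop n (pmono d j) x = 0"
proof -
  have "\<And>r. r \<in> mbox d j \<Longrightarrow> Scoef \<theta> n (\<Sum>i<d. r i) k = 0"
  proof -
    fix r assume "r \<in> mbox d j"
    then have "(\<Sum>i<d. r i) \<le> k" using mbox_sum_le j by (auto simp: mindex_eq_def)
    then show "Scoef \<theta> n (\<Sum>i<d. r i) k = 0" using Scoef_zero[OF th _ kn] by simp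
  qed
  then show ?thesis unfolding Aop_pmono[OF j x] by simp
qed

lemma self_mbox: "j \<in> mindex_le d N \<Longrightarrow> j \<in> mbox d j"
  by (auto simp: mbox_def mindex_le_def)

lemma mbox_strict: assumes j: "j \<in> mindex_eq d n" and r: "r \<in> mbox d j - {j}"
  shows "r \<in> mindex_le d (n - 1)" "(\<Sum>i<d. r i) < n"
proof -
  obtain i where i: "r i \<noteq> j i" using r by (auto simp: fun_eq_iff)
  have id: "i < d" using i j r by (auto simp: mbox_def mindex_eq_def) (metis not_le)?
  have "(\<Sum>i<d. r i) < (\<Sum>i<d. j i)"
    by (rule sum_strict_mono_ex1) (use r id i in \<open>auto simp: mbox_def intro!: bexI[of _ i]\<close>)
  then show lt: "(\<Sum>i<d. r i) < n" using j by (simp add: mindex_eq_def)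
  then show "r \<in> mindex_le d (n - 1)" using r by (auto simp: mindex_le_def mbox_def)
qed

lemma Aop_top: assumes j: "j \<in> mindex_eq d n" and x: "x \<in> dsimplex d"
  shows "Aop n (pmono d j) x = pmono d j x + (\<Sum>r\<in>mbox d j - {j}. Cr j r * Scoef \<theta> n (\<Sum>i<d. r i) n * pmono d r x)"
proof -
  have jm: "j \<in> mbox d j" using self_mbox mindex_eq_le[of n n d] j by blast
  have "Cr j j = 1" by (simp add: Cr_def crise_diag)
  moreover have "Scoef \<theta> n (\<Sum>i<d. j i) n = 1" using j Scoef_diag[OF th] by (simp add: mindex_eq_def)
  ultimately show ?thesis unfolding Aop_pmono[OF j x]
    by (subst sum.remove[OF finite_mbox jm]) simp
qed

lemma Aop_lin: assumes "finite J"
  shows "Aop n (\<lambda>y. \<Sum>j\<in>J. c j * pmono d j y) x = (\<Sum>j\<in>J. c j * Aop n (pmono d j) x)"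
proof -
  have "Aop n (\<lambda>y. \<Sum>j\<in>J. c j * pmono d j y) x = E (\<lambda>y. \<Sum>j\<in>J. c j * (G n x y * pmono d j y))"
    unfolding Aop_def sum_distrib_left by (simp add: mult_ac)
  also have "\<dots> = (\<Sum>j\<in>J. E (\<lambda>y. c j * (G n x y * pmono d j y)))"
    by (rule E_sum[OF assms]) (intro Bnd_cmult Bnd_mult Bnd_G Bnd_pmono)
  also have "\<dots> = (\<Sum>j\<in>J. c j * Aop n (pmono d j) x)"
    by (simp add: E_cmult Aop_def)
  finally show ?thesis .
qed

lemma mindex_le_eq: "j \<in> mindex_le d N \<Longrightarrow> j \<in> mindex_eq d (\<Sum>i<d. j i)"
  by (auto simp: mindex_le_def mindex_eq_def)

lemma Aop_poly_low: assumes f: "f \<in> polys d n'" and nn: "n' < n" and x: "x \<in> dsimplex d"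
  shows "Aop n f x = 0"
proof -
  obtain c where c: "f = (\<lambda>y. \<Sum>j\<in>mindex_le d n'. c j * pmono d j y)" using f by (auto simp: polys_def)
  have "\<And>j. j \<in> mindex_le d n' \<Longrightarrow> Aop n (pmono d j) x = 0"
  proof -
    fix j assume j: "j \<in> mindex_le d n'"
    then have "(\<Sum>i<d. j i) < n" using nn by (auto simp: mindex_le_def)
    then show "Aop n (pmono d j) x = 0" using Aop_low[OF mindex_le_eq[OF j] _ x] by simp
  qed
  then show ?thesis unfolding c Aop_lin[OF finite_mindex_le] by simp
qed

lemma Aop_poly_top: assumes f: "f \<in> polys d n"
  shows "\<exists>h\<in>polys d (n - 1). (\<forall>x\<in>dsimplex d. Aop n f x - f x = h x) \<and> (n = 0 \<longrightarrow> (\<forall>x\<in>dsimplex d. h x = 0))"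
proof -
  obtain c where c: "f = (\<lambda>y. \<Sum>j\<in>mindex_le d n. c j * pmono d j y)" using f by (auto simp: polys_def)
  define T where "T = {j \<in> mindex_le d n. (\<Sum>i<d. j i) = n}"
  define L where "L = {j \<in> mindex_le d n. (\<Sum>i<d. j i) < n}"
  define SI where "SI = Sigma T (\<lambda>j. mbox d j - {j})"
  have fT: "finite T" "finite L" unfolding T_def L_def using finite_mindex_le by auto
  have fSI: "finite SI" unfolding SI_def using fT by (auto intro!: finite_SigmaI finite_mbox)
  have TL: "mindex_le d n = T \<union> L" "T \<inter> L = {}" unfolding T_def L_def by (auto simp: mindex_le_def)
  define h where "h x = (\<Sum>p\<in>SI. (c (fst p) * Cr (fst p) (snd p) * Scoef \<theta> n (\<Sum>i<d. snd p i) n) * pmono d (snd p) x)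
                        - (\<Sum>j\<in>L. c j * pmono d j x)" for x
  have hp: "h \<in> polys d (n - 1)"
    unfolding h_def[abs_def]
  proof (rule polys_diff)
    show "(\<lambda>x. \<Sum>p\<in>SI. (c (fst p) * Cr (fst p) (snd p) * Scoef \<theta> n (\<Sum>i<d. snd p i) n) * pmono d (snd p) x) \<in> polys d (n - 1)"
    proof (rule polys_sum_gen[OF fSI])
      fix p assume "p \<in> SI"
      then have "fst p \<in> mindex_eq d n" "snd p \<in> mbox d (fst p) - {fst p}"
        unfolding SI_def T_def by (auto simp: mindex_le_def mindex_eq_def)
      then show "snd p \<in> mindex_le d (n - 1)" by (rule mbox_strict)
    qed
    show "(\<lambda>x. \<Sum>j\<in>L. c j * pmono d j x) \<in> polys d (n - 1)"
      using polys_sum_gen[OF fT(2), of id d "n - 1" c] unfolding L_def by (force simp: mindex_le_def)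
  qed
  have eq: "Aop n f x - f x = h x" if x: "x \<in> dsimplex d" for x
  proof -
    have "Aop n f x = (\<Sum>j\<in>mindex_le d n. c j * Aop n (pmono d j) x)"
      unfolding c by (rule Aop_lin[OF finite_mindex_le])
    also have "\<dots> = (\<Sum>j\<in>T. c j * Aop n (pmono d j) x) + (\<Sum>j\<in>L. c j * Aop n (pmono d j) x)"
      unfolding TL(1) by (rule sum.union_disjoint) (use fT TL in auto)
    also have "(\<Sum>j\<in>L. c j * Aop n (pmono d j) x) = 0"
    proof (rule sum.neutral, rule ballI)
      fix j assume "j \<in> L"
      then have "j \<in> mindex_eq d (\<Sum>i<d. j i)" "(\<Sum>i<d. j i) < n" unfolding L_def by (auto intro: mindex_le_eq)
      then show "c j * Aop n (pmono d j) x = 0" using Aop_low[OF _ _ x] by simp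
    qed
    also have "(\<Sum>j\<in>T. c j * Aop n (pmono d j) x) = (\<Sum>j\<in>T. c j * pmono d j x + c j * (\<Sum>r\<in>mbox d j - {j}. Cr j r * Scoef \<theta> n (\<Sum>i<d. r i) n * pmono d r x))"
    proof (intro sum.cong refl)
      fix j assume "j \<in> T"
      then have "j \<in> mindex_eq d n" unfolding T_def by (auto simp: mindex_le_def mindex_eq_def)
      then show "c j * Aop n (pmono d j) x = c j * pmono d j x + c j * (\<Sum>r\<in>mbox d j - {j}. Cr j r * Scoef \<theta> n (\<Sum>i<d. r i) n * pmono d r x)"
        by (simp only: Aop_top[OF _ x] distrib_left)
    qed
    also have "\<dots> = (\<Sum>j\<in>T. c j * pmono d j x) + (\<Sum>p\<in>SI. (c (fst p) * Cr (fst p) (snd p) * Scoef \<theta> n (\<Sum>i<d. snd p i) n) * pmono d (snd p) x)"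
    proof -
      have "(\<Sum>j\<in>T. c j * (\<Sum>r\<in>mbox d j - {j}. Cr j r * Scoef \<theta> n (\<Sum>i<d. r i) n * pmono d r x))
          = (\<Sum>j\<in>T. \<Sum>r\<in>mbox d j - {j}. (c j * Cr j r * Scoef \<theta> n (\<Sum>i<d. r i) n) * pmono d r x)"
        by (simp add: sum_distrib_left mult_ac)
      also have "\<dots> = (\<Sum>(j,r)\<in>SI. (c j * Cr j r * Scoef \<theta> n (\<Sum>i<d. r i) n) * pmono d r x)"
        unfolding SI_def by (rule sum.Sigma) (use fT finite_mbox in auto)
      also have "\<dots> = (\<Sum>p\<in>SI. (c (fst p) * Cr (fst p) (snd p) * Scoef \<theta> n (\<Sum>i<d. snd p i) n) * pmono d (snd p) x)"
        by (intro sum.cong refl) auto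
      finally show ?thesis by (simp add: sum.distrib)
    qed
    moreover have "f x = (\<Sum>j\<in>T. c j * pmono d j x) + (\<Sum>j\<in>L. c j * pmono d j x)"
      unfolding c TL(1) by (rule sum.union_disjoint) (use fT TL in auto)
    ultimately show ?thesis unfolding h_def by simp
  qed
  have z: "n = 0 \<longrightarrow> (\<forall>x\<in>dsimplex d. h x = 0)"
  proof (intro impI ballI)
    fix x assume n0: "n = 0"
    have "SI = {}"
    proof -
      have "\<And>j. j \<in> T \<Longrightarrow> mbox d j - {j} = {}"
      proof -
        fix j assume "j \<in> T"
        then have a: "\<forall>i\<ge>d. j i = 0" "\<forall>a\<in>{..<d}. j a = 0" using n0 unfolding T_def by (auto simp: mindex_le_def)
        have j0: "\<forall>i. j i = 0"
        proof
          fix i show "j i = 0" using a by (cases "i < d") auto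
        qed
        show "mbox d j - {j} = {}" using j0 by (auto simp: mbox_def fun_eq_iff) (metis not_le)
      qed
      then show ?thesis unfolding SI_def by auto
    qed
    moreover have "L = {}" using n0 unfolding L_def by auto
    ultimately show "h x = 0" unfolding h_def by simp
  qed
  show ?thesis using hp eq z by blast
qed

end

context mset
begin

lemma Vspace_polys: "f \<in> Vspace d \<beta>' n \<Longrightarrow> f \<in> polys d n"
  by (simp add: Vspace_def)

lemma onb_coef:
  fixes K j :: nat
  assumes ob: "\<forall>j<K. \<forall>k<K. dir_inner d (symparam \<theta> d) (P j) (P k) = (if j = k then 1 else 0)"
    and bP: "\<forall>k<K. Bnd d (P k)"
    and h: "\<forall>y\<in>dsimplex d. h y = (\<Sum>k<K. c k * P k y)" and j: "j < K"
  shows "E (\<lambda>y. h y * P j y) = c j"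
proof -
  have "E (\<lambda>y. h y * P j y) = E (\<lambda>y. \<Sum>k<K. c k * (P k y * P j y))"
    by (rule E_cong) (simp add: h sum_distrib_right mult.assoc)
  also have "\<dots> = (\<Sum>k<K. E (\<lambda>y. c k * (P k y * P j y)))"
    by (rule E_sum) (use bP j in \<open>auto intro!: Bnd_cmult Bnd_mult \<close>)
  also have "\<dots> = (\<Sum>k<K. c k * (if k = j then 1 else 0))"
    using ob j by (simp add: E_cmult dir_inner_def)
  also have "\<dots> = (\<Sum>k<K. if k = j then c j else 0)" by (intro sum.cong) auto
  also have "\<dots> = c j" using j by (simp add: sum.delta)
  finally show ?thesis .
qed

lemma G_in_V: assumes x: "x \<in> dsimplex d" shows "G n x \<in> Vspace d (symparam \<theta> d) n"
  unfolding Vspace_def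
proof (intro CollectI conjI allI impI ballI)
  show "G n x \<in> polys d n" by (rule G_polys)
  fix m g assume m: "m < n" and g: "g \<in> polys d m"
  show "dir_inner d (symparam \<theta> d) (G n x) g = 0"
    unfolding dir_inner_def using Aop_poly_low[OF g m x] by (simp add: Aop_def)
qed

lemma Aop_fix:
  assumes onbP: "onb d (symparam \<theta> d) (Vspace d (symparam \<theta> d) n) K P"
    and f: "f \<in> Vspace d (symparam \<theta> d) n" and z: "z \<in> dsimplex d"
  shows "Aop n f z = f z"
proof -
  have fp: "f \<in> polys d n" using f by (simp add: Vspace_def)
  have bf: "Bnd d f" by (rule Bnd_polys[OF fp])
  have PV: "\<forall>k<K. P k \<in> Vspace d (symparam \<theta> d) n" and ob: "\<forall>j<K. \<forall>k<K. dir_inner d (symparam \<theta> d) (P j) (P k) = (if j = k then 1 else 0)"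
    and span: "\<forall>f\<in>Vspace d (symparam \<theta> d) n. \<exists>c. \<forall>x\<in>dsimplex d. f x = (\<Sum>k<K. c k * P k x)"
    using onbP by (auto simp: onb_def)
  have bP: "\<forall>k<K. Bnd d (P k)" using PV by (auto intro: Bnd_polys simp: Vspace_def)
  define H where "H z = Aop n f z - f z" for z
  have HV: "H \<in> Vspace d (symparam \<theta> d) n"
    unfolding Vspace_def
  proof (intro CollectI conjI allI impI ballI)
    show "H \<in> polys d n" unfolding H_def[abs_def] by (rule polys_diff[OF Aop_polys[OF bf] fp])
    fix m g assume m: "m < n" and g: "g \<in> polys d m"
    have bg: "Bnd d g" by (rule Bnd_polys[OF g])
    have "dir_inner d (symparam \<theta> d) H g = E (\<lambda>y. Aop n f y * g y) - E (\<lambda>y. f y * g y)"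
      unfolding dir_inner_def H_def left_diff_distrib
      by (rule E_diff) (intro Bnd_mult Bnd_Aop bf bg)+
    also have "E (\<lambda>y. Aop n f y * g y) = E (\<lambda>y. Aop n g y * f y)" by (rule Aop_swap[OF bf bg])
    also have "\<dots> = E (\<lambda>y. 0 * f y)" by (rule E_cong) (simp add: Aop_poly_low[OF g m])
    also have "E (\<lambda>y. f y * g y) = 0" using f m g by (auto simp: Vspace_def dir_inner_def)
    finally show "dir_inner d (symparam \<theta> d) H g = 0" by (simp add: E_cmult[of 0, simplified])
  qed
  obtain e where e: "\<forall>y\<in>dsimplex d. H y = (\<Sum>k<K. e k * P k y)" using span HV by blast
  obtain h where hp: "h \<in> polys d (n - 1)" and hH: "\<forall>x\<in>dsimplex d. Aop n f x - f x = h x"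
    and h0: "n = 0 \<longrightarrow> (\<forall>x\<in>dsimplex d. h x = 0)"
    using Aop_poly_top[OF fp] by blast
  have "e k = 0" if k: "k < K" for k
  proof -
    have "e k = E (\<lambda>y. H y * P k y)" using onb_coef[OF ob bP e k] by simp
    also have "\<dots> = E (\<lambda>y. P k y * h y)" by (rule E_cong) (simp add: H_def hH)
    also have "\<dots> = 0"
    proof (cases "n = 0")
      case True
      then have "E (\<lambda>y. P k y * h y) = E (\<lambda>y. 0 * h y)" using h0 by (intro E_cong) simp
      then show ?thesis by (simp add: E_cmult[of 0, simplified])
    next
      case False
      then have "n - 1 < n" by simp
      then show ?thesis using PV k hp unfolding Vspace_def dir_inner_def by blast
    qed
    finally show ?thesis .
  qed
  then have "H z = 0" using e z by simp
  then show ?thesis by (simp add: H_def)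
qed

lemma Q_eq_G:
  assumes onbP: "onb d (symparam \<theta> d) (Vspace d (symparam \<theta> d) n) K P"
    and x: "x \<in> dsimplex d" and y: "y \<in> dsimplex d"
  shows "okernel K P x y = G n x y"
proof -
  have PV: "\<forall>k<K. P k \<in> Vspace d (symparam \<theta> d) n" and ob: "\<forall>j<K. \<forall>k<K. dir_inner d (symparam \<theta> d) (P j) (P k) = (if j = k then 1 else 0)"
    and span: "\<forall>f\<in>Vspace d (symparam \<theta> d) n. \<exists>c. \<forall>x\<in>dsimplex d. f x = (\<Sum>k<K. c k * P k x)"
    using onbP by (auto simp: onb_def)
  have bP: "\<forall>k<K. Bnd d (P k)" using PV by (auto intro: Bnd_polys simp: Vspace_def)
  obtain c where c: "\<forall>y\<in>dsimplex d. G n x y = (\<Sum>k<K. c k * P k y)" using span G_in_V[OF x] by blast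
  have "c k = P k x" if k: "k < K" for k
  proof -
    have "c k = E (\<lambda>y. G n x y * P k y)" using onb_coef[OF ob bP c k] by simp
    also have "\<dots> = Aop n (P k) x" by (simp add: Aop_def)
    also have "\<dots> = P k x" using Aop_fix[OF onbP _ x] PV k by simp
    finally show ?thesis .
  qed
  then show ?thesis using c y by (simp add: okernel_def)
qed

end

lemma finite_Sym: "finite (Sym d)"
  unfolding Sym_def by (rule finite_permutations) simp

lemma card_Sym: "card (Sym d) = fact d"
  unfolding Sym_def by (rule card_permutations) simp_all

lemma Sym_inv: "\<sigma> \<in> Sym d \<Longrightarrow> inv \<sigma> \<in> Sym d"
  unfolding Sym_def by (simp add: permutes_inv)

lemma Sym_comp: "\<sigma> \<in> Sym d \<Longrightarrow> \<tau> \<in> Sym d \<Longrightarrow> \<tau> \<circ> \<sigma> \<in> Sym d"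
  unfolding Sym_def by (simp add: permutes_compose)

lemma perm_comp: "perm_act \<sigma> (perm_act \<tau> x) = perm_act (\<tau> \<circ> \<sigma>) x"
  by (simp add: perm_act_def)

lemma perm_simplex: assumes s: "\<sigma> \<in> Sym d" and x: "x \<in> dsimplex d" shows "perm_act \<sigma> x \<in> dsimplex d"
proof -
  have p: "\<sigma> permutes {..<d}" using s by (simp add: Sym_def)
  have "(\<Sum>i<d. x (\<sigma> i)) = (\<Sum>i<d. x i)" using sum.permute[OF p, of x] by (simp add: comp_def)
  moreover have "\<forall>i<d. \<sigma> i < d" using p permutes_in_image by fastforce
  moreover have "\<forall>i. d \<le> i \<longrightarrow> \<sigma> i = i" using p by (simp add: permutes_def)
  ultimately show ?thesis using x by (auto simp: dsimplex_def perm_act_def)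
qed

lemma sum_Sym_left: assumes "\<tau> \<in> Sym d" shows "(\<Sum>\<sigma>\<in>Sym d. F (\<tau> \<circ> \<sigma>)) = (\<Sum>\<sigma>\<in>Sym d. F \<sigma>)"
proof (rule sum.reindex_bij_witness[where i = "\<lambda>\<sigma>. inv \<tau> \<circ> \<sigma>" and j = "\<lambda>\<sigma>. \<tau> \<circ> \<sigma>"])
  have p: "\<tau> permutes {..<d}" using assms by (simp add: Sym_def)
  show "\<And>a. inv \<tau> \<circ> (\<tau> \<circ> a) = a" using permutes_inv_o(2)[OF p] by (simp add: o_assoc)
  show "\<And>b. \<tau> \<circ> (inv \<tau> \<circ> b) = b" using permutes_inv_o(1)[OF p] by (simp add: o_assoc)
qed (use assms Sym_comp Sym_inv in auto)

lemma sum_Sym_right: assumes "\<tau> \<in> Sym d" shows "(\<Sum>\<sigma>\<in>Sym d. F (\<sigma> \<circ> \<tau>)) = (\<Sum>\<sigma>\<in>Sym d. F \<sigma>)"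
proof (rule sum.reindex_bij_witness[where i = "\<lambda>\<sigma>. \<sigma> \<circ> inv \<tau>" and j = "\<lambda>\<sigma>. \<sigma> \<circ> \<tau>"])
  have p: "\<tau> permutes {..<d}" using assms by (simp add: Sym_def)
  show "\<And>a. a \<circ> \<tau> \<circ> inv \<tau> = a" using permutes_inv_o(1)[OF p] by (simp add: o_assoc[symmetric])
  show "\<And>b. b \<circ> inv \<tau> \<circ> \<tau> = b" using permutes_inv_o(2)[OF p] by (simp add: o_assoc[symmetric])
qed (use assms Sym_comp Sym_inv in auto)

context mset
begin

lemma multinom_perm: assumes "\<tau> permutes {..<d}" shows "multinom d m (l \<circ> \<tau>) = multinom d m l"
  unfolding multinom_def using prod.permute[OF assms, of "\<lambda>i. fact (l i) :: real"] by (simp add: comp_def)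

lemma mindex_eq_perm: assumes p: "\<tau> permutes {..<d}" and l: "l \<in> mindex_eq d m" shows "l \<circ> \<tau> \<in> mindex_eq d m"
proof -
  have "(\<Sum>i<d. (l \<circ> \<tau>) i) = (\<Sum>i<d. l i)" using sum.permute[OF p, of l] by simp
  moreover have "\<forall>i. d \<le> i \<longrightarrow> \<tau> i = i" using p by (simp add: permutes_def)
  ultimately show ?thesis using l by (auto simp: mindex_eq_def)
qed

lemma wgt_perm: assumes "\<tau> permutes {..<d}" shows "wgt (l \<circ> \<tau>) m = wgt l m"
  unfolding wgt_def multinom_perm[OF assms] Mom_perm[OF assms] ..

lemma xi_perm: assumes t: "\<tau> \<in> Sym d"
  shows "xi \<theta> d m u (perm_act \<tau> v) = xi \<theta> d m (perm_act (inv \<tau>) u) v"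
proof -
  have p: "\<tau> permutes {..<d}" using t by (simp add: Sym_def)
  have pi: "inv \<tau> permutes {..<d}" using permutes_inv[OF p] .
  have "xi \<theta> d m u (perm_act \<tau> v) = (\<Sum>l\<in>mindex_eq d m. wgt l m * pmono d l u * pmono d (l \<circ> inv \<tau>) v)"
    unfolding xi_alt pmono_perm[OF p] ..
  also have "\<dots> = (\<Sum>l\<in>mindex_eq d m. wgt l m * pmono d l (perm_act (inv \<tau>) u) * pmono d l v)"
  proof (rule sum.reindex_bij_witness[where i = "\<lambda>l. l \<circ> \<tau>" and j = "\<lambda>l. l \<circ> inv \<tau>"])
    fix a assume a: "a \<in> mindex_eq d m"
    show "a \<circ> inv \<tau> \<circ> \<tau> = a" using permutes_inv_o(2)[OF p] by (simp add: o_assoc[symmetric])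
    show "a \<circ> inv \<tau> \<in> mindex_eq d m" by (rule mindex_eq_perm[OF pi a])
    have "pmono d (a \<circ> inv \<tau>) (perm_act (inv \<tau>) u) = pmono d (a \<circ> inv \<tau> \<circ> inv (inv \<tau>)) u"
      by (rule pmono_perm[OF pi])
    also have "a \<circ> inv \<tau> \<circ> inv (inv \<tau>) = a"
      unfolding permutes_inv_inv[OF p] using permutes_inv_o(2)[OF p] by (simp add: o_assoc[symmetric])
    finally have e: "pmono d (a \<circ> inv \<tau>) (perm_act (inv \<tau>) u) = pmono d a u" .
    show "wgt (a \<circ> inv \<tau>) m * pmono d (a \<circ> inv \<tau>) (perm_act (inv \<tau>) u) * pmono d (a \<circ> inv \<tau>) v
        = wgt a m * pmono d a u * pmono d (a \<circ> inv \<tau>) v"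
      unfolding e wgt_perm[OF pi] ..
  next
    fix b assume b: "b \<in> mindex_eq d m"
    show "b \<circ> \<tau> \<circ> inv \<tau> = b" using permutes_inv_o(1)[OF p] by (simp add: o_assoc[symmetric])
    show "b \<circ> \<tau> \<in> mindex_eq d m" by (rule mindex_eq_perm[OF p b])
  qed
  finally show ?thesis unfolding xi_alt .
qed

lemma G_perm: assumes t: "\<tau> \<in> Sym d"
  shows "G n u (perm_act \<tau> v) = G n (perm_act (inv \<tau>) u) v"
  unfolding G_def xi_perm[OF t] ..

lemma E_dbl: assumes "finite A" "finite B"
  shows "E (\<lambda>x. \<Sum>a\<in>A. \<Sum>b\<in>B. c a * e b * pmono d (\<rho> a b) x) = (\<Sum>a\<in>A. \<Sum>b\<in>B. c a * e b * Mom (\<rho> a b))"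
proof -
  have "E (\<lambda>x. \<Sum>a\<in>A. \<Sum>b\<in>B. c a * e b * pmono d (\<rho> a b) x) = (\<Sum>a\<in>A. E (\<lambda>x. \<Sum>b\<in>B. c a * e b * pmono d (\<rho> a b) x))"
    by (rule E_sum[OF assms(1)]) (intro Bnd_sum assms Bnd_cmult Bnd_pmono)
  also have "\<dots> = (\<Sum>a\<in>A. \<Sum>b\<in>B. E (\<lambda>x. c a * e b * pmono d (\<rho> a b) x))"
    by (intro sum.cong refl E_sum assms Bnd_cmult Bnd_pmono)
  also have "\<dots> = (\<Sum>a\<in>A. \<Sum>b\<in>B. c a * e b * Mom (\<rho> a b))"
    by (simp add: E_cmult E_pm)
  finally show ?thesis .
qed

lemma E_perm_inv: assumes s: "\<sigma> \<in> Sym d" and f: "f \<in> polys d N" and g: "g \<in> polys d N"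
  shows "E (\<lambda>x. f (perm_act \<sigma> x) * g (perm_act \<sigma> x)) = E (\<lambda>x. f x * g x)"
proof -
  have p: "\<sigma> permutes {..<d}" using s by (simp add: Sym_def)
  have pi: "inv \<sigma> permutes {..<d}" by (rule permutes_inv[OF p])
  obtain c where c: "f = (\<lambda>y. \<Sum>a\<in>mindex_le d N. c a * pmono d a y)" using f by (auto simp: polys_def)
  obtain e where e: "g = (\<lambda>y. \<Sum>b\<in>mindex_le d N. e b * pmono d b y)" using g by (auto simp: polys_def)
  have "E (\<lambda>x. f (perm_act \<sigma> x) * g (perm_act \<sigma> x))
      = E (\<lambda>x. \<Sum>a\<in>mindex_le d N. \<Sum>b\<in>mindex_le d N. c a * e b * pmono d ((\<lambda>i. a i + b i) \<circ> inv \<sigma>) x)"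
  proof (rule arg_cong[where f = E], rule ext)
    fix x
    have "f (perm_act \<sigma> x) * g (perm_act \<sigma> x) = (\<Sum>a\<in>mindex_le d N. \<Sum>b\<in>mindex_le d N. (c a * pmono d (a \<circ> inv \<sigma>) x) * (e b * pmono d (b \<circ> inv \<sigma>) x))"
      unfolding c e pmono_perm[OF p] by (rule sum_product)
    also have "\<dots> = (\<Sum>a\<in>mindex_le d N. \<Sum>b\<in>mindex_le d N. c a * e b * pmono d ((\<lambda>i. a i + b i) \<circ> inv \<sigma>) x)"
    proof (intro sum.cong refl)
      fix a b
      have "pmono d (a \<circ> inv \<sigma>) x * pmono d (b \<circ> inv \<sigma>) x = pmono d ((\<lambda>i. a i + b i) \<circ> inv \<sigma>) x"
        unfolding pmono_add by (simp add: comp_def)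
      then show "c a * pmono d (a \<circ> inv \<sigma>) x * (e b * pmono d (b \<circ> inv \<sigma>) x) = c a * e b * pmono d ((\<lambda>i. a i + b i) \<circ> inv \<sigma>) x"
        by (simp add: mult_ac)
    qed
    finally show "f (perm_act \<sigma> x) * g (perm_act \<sigma> x) = (\<Sum>a\<in>mindex_le d N. \<Sum>b\<in>mindex_le d N. c a * e b * pmono d ((\<lambda>i. a i + b i) \<circ> inv \<sigma>) x)" .
  qed
  also have "\<dots> = (\<Sum>a\<in>mindex_le d N. \<Sum>b\<in>mindex_le d N. c a * e b * Mom ((\<lambda>i. a i + b i) \<circ> inv \<sigma>))"
    by (rule E_dbl) (rule finite_mindex_le)+
  also have "\<dots> = (\<Sum>a\<in>mindex_le d N. \<Sum>b\<in>mindex_le d N. c a * e b * Mom (\<lambda>i. a i + b i))"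
    by (simp add: Mom_perm[OF pi])
  also have "\<dots> = E (\<lambda>x. \<Sum>a\<in>mindex_le d N. \<Sum>b\<in>mindex_le d N. c a * e b * pmono d (\<lambda>i. a i + b i) x)"
    by (rule E_dbl[symmetric]) (rule finite_mindex_le)+
  also have "\<dots> = E (\<lambda>x. f x * g x)"
  proof (rule arg_cong[where f = E], rule ext)
    fix x
    have "f x * g x = (\<Sum>a\<in>mindex_le d N. \<Sum>b\<in>mindex_le d N. (c a * pmono d a x) * (e b * pmono d b x))"
      unfolding c e by (rule sum_product)
    also have "\<dots> = (\<Sum>a\<in>mindex_le d N. \<Sum>b\<in>mindex_le d N. c a * e b * pmono d (\<lambda>i. a i + b i) x)"
      by (simp add: pmono_add[symmetric] mult_ac)
    finally show "(\<Sum>a\<in>mindex_le d N. \<Sum>b\<in>mindex_le d N. c a * e b * pmono d (\<lambda>i. a i + b i) x) = f x * g x" by simp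
  qed
  finally show ?thesis .
qed

lemma S_in_V: assumes S: "S \<in> Vsym d (symparam \<theta> d) n" shows "S \<in> Vspace d (symparam \<theta> d) n"
  unfolding Vspace_def
proof (intro CollectI conjI allI impI ballI)
  have Sp: "S \<in> polys d n" and Ss: "symmetric_fun d S"
    and So: "\<forall>m<n. \<forall>g\<in>polys d m. symmetric_fun d g \<longrightarrow> dir_inner d (symparam \<theta> d) S g = 0"
    using S by (auto simp: Vsym_def)
  show "S \<in> polys d n" by (rule Sp)
  fix m g assume m: "m < n" and g: "g \<in> polys d m"
  define sg where "sg x = (1 / fact d) * (\<Sum>\<sigma>\<in>Sym d. g (perm_act \<sigma> x))" for x
  have gp: "\<And>\<sigma>. \<sigma> \<in> Sym d \<Longrightarrow> (\<lambda>x. g (perm_act \<sigma> x)) \<in> polys d m"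
    using polys_perm g by (simp add: Sym_def)
  have sgp: "sg \<in> polys d m" unfolding sg_def[abs_def]
    by (intro polys_cmult polys_finsum finite_Sym gp)
  have sgs: "symmetric_fun d sg" unfolding symmetric_fun_def
  proof (intro ballI)
    fix \<tau> x assume t: "\<tau> \<in> Sym d" and x: "x \<in> dsimplex d"
    show "sg (perm_act \<tau> x) = sg x" unfolding sg_def perm_comp using sum_Sym_left[OF t, of "\<lambda>\<sigma>. g (perm_act \<sigma> x)"] by simp
  qed
  have z: "E (\<lambda>x. S x * sg x) = 0" using So m sgp sgs by (simp add: dir_inner_def)
  have inv1: "E (\<lambda>x. S x * g (perm_act \<sigma> x)) = E (\<lambda>x. S x * g x)" if s: "\<sigma> \<in> Sym d" for \<sigma>
  proof -
    have p: "\<sigma> permutes {..<d}" using s by (simp add: Sym_def)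
    define S' where "S' z = S (perm_act (inv \<sigma>) z)" for z
    have S'p: "S' \<in> polys d (n + m)" unfolding S'_def[abs_def]
      by (rule polys_perm[OF permutes_inv[OF p]]) (rule polys_mono[OF _ Sp], simp)
    have gp2: "g \<in> polys d (n + m)" by (rule polys_mono[OF _ g]) simp
    have "\<And>x. S x = S' (perm_act \<sigma> x)"
      unfolding S'_def perm_comp permutes_inv_o(1)[OF p] by (simp add: perm_act_def)
    then have "E (\<lambda>x. S x * g (perm_act \<sigma> x)) = E (\<lambda>x. S' (perm_act \<sigma> x) * g (perm_act \<sigma> x))" by simp
    also have "\<dots> = E (\<lambda>x. S' x * g x)" by (rule E_perm_inv[OF s S'p gp2])
    also have "\<dots> = E (\<lambda>x. S x * g x)"
    proof (rule E_cong)
      fix x assume "x \<in> dsimplex d"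
      then show "S' x * g x = S x * g x" using Ss Sym_inv[OF s] unfolding S'_def symmetric_fun_def by simp
    qed
    finally show ?thesis .
  qed
  have "E (\<lambda>x. S x * sg x) = (1 / fact d) * (\<Sum>\<sigma>\<in>Sym d. E (\<lambda>x. S x * g (perm_act \<sigma> x)))"
  proof -
    have "E (\<lambda>x. S x * sg x) = E (\<lambda>x. (1 / fact d) * (\<Sum>\<sigma>\<in>Sym d. S x * g (perm_act \<sigma> x)))"
      unfolding sg_def by (simp add: sum_distrib_left mult_ac)
    also have "\<dots> = (1 / fact d) * E (\<lambda>x. \<Sum>\<sigma>\<in>Sym d. S x * g (perm_act \<sigma> x))" by (rule E_cmult)
    also have "E (\<lambda>x. \<Sum>\<sigma>\<in>Sym d. S x * g (perm_act \<sigma> x)) = (\<Sum>\<sigma>\<in>Sym d. E (\<lambda>x. S x * g (perm_act \<sigma> x)))"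
      by (rule E_sum[OF finite_Sym]) (intro Bnd_mult Bnd_polys[OF Sp] Bnd_polys[OF gp])
    finally show ?thesis .
  qed
  also have "\<dots> = (1 / fact d) * (fact d * E (\<lambda>x. S x * g x))" using inv1 card_Sym by simp
  also have "\<dots> = E (\<lambda>x. S x * g x)" by simp
  finally show "dir_inner d (symparam \<theta> d) S g = 0" using z by (simp add: dir_inner_def)
qed

end

context mset
begin

lemma E_Rlin: assumes g: "Bnd d g"
  shows "E (\<lambda>z. (1 / fact d) * (\<Sum>\<sigma>\<in>Sym d. G n (perm_act \<sigma> x) z) * g z)
       = (1 / fact d) * (\<Sum>\<sigma>\<in>Sym d. Aop n g (perm_act \<sigma> x))"
proof -
  have "E (\<lambda>z. (1 / fact d) * (\<Sum>\<sigma>\<in>Sym d. G n (perm_act \<sigma> x) z) * g z)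
      = E (\<lambda>z. (1 / fact d) * (\<Sum>\<sigma>\<in>Sym d. G n (perm_act \<sigma> x) z * g z))"
    by (simp add: sum_distrib_right mult.assoc)
  also have "\<dots> = (1 / fact d) * E (\<lambda>z. \<Sum>\<sigma>\<in>Sym d. G n (perm_act \<sigma> x) z * g z)" by (rule E_cmult)
  also have "E (\<lambda>z. \<Sum>\<sigma>\<in>Sym d. G n (perm_act \<sigma> x) z * g z) = (\<Sum>\<sigma>\<in>Sym d. Aop n g (perm_act \<sigma> x))"
    unfolding Aop_def by (rule E_sum[OF finite_Sym]) (intro Bnd_mult Bnd_G g)
  finally show ?thesis .
qed

lemma main_eqs:
  assumes onbP: "onb d (symparam \<theta> d) (Vspace d (symparam \<theta> d) n) K P"
    and onbS: "onb d (symparam \<theta> d) (Vsym d (symparam \<theta> d) n) L S"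
    and x: "x \<in> dsimplex d" and y: "y \<in> dsimplex d"
  shows "okernel L S x y
           = (1 / fact d) * (\<Sum>\<sigma>\<in>Sym d. okernel K P (perm_act \<sigma> x) y)
       \<and> (1 / fact d) * (\<Sum>\<sigma>\<in>Sym d. okernel K P (perm_act \<sigma> x) y)
           = (1 / (fact d)^2) * (\<Sum>\<sigma>\<in>Sym d. \<Sum>\<tau>\<in>Sym d. okernel K P (perm_act \<sigma> x) (perm_act \<tau> y))
       \<and> (1 / (fact d)^2) * (\<Sum>\<sigma>\<in>Sym d. \<Sum>\<tau>\<in>Sym d. okernel K P (perm_act \<sigma> x) (perm_act \<tau> y))
           = (\<Sum>m\<le>n. a_coef \<theta> n m * ((1 / fact d) * (\<Sum>\<sigma>\<in>Sym d. xi \<theta> d m (perm_act \<sigma> x) y)))"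
proof -
  define R where "R = (1 / fact d) * (\<Sum>\<sigma>\<in>Sym d. G n (perm_act \<sigma> x) y)"
  have fd: "(fact d :: real) > 0" by simp
  have E2: "(1 / fact d) * (\<Sum>\<sigma>\<in>Sym d. okernel K P (perm_act \<sigma> x) y) = R"
    unfolding R_def using Q_eq_G[OF onbP perm_simplex[OF _ x] y] by simp
  have inner: "(\<Sum>\<tau>\<in>Sym d. okernel K P (perm_act \<sigma> x) (perm_act \<tau> y)) = (\<Sum>\<tau>\<in>Sym d. G n (perm_act (\<sigma> \<circ> inv \<tau>) x) y)"
    if s: "\<sigma> \<in> Sym d" for \<sigma>
  proof (intro sum.cong refl)
    fix \<tau> assume t: "\<tau> \<in> Sym d"
    have "okernel K P (perm_act \<sigma> x) (perm_act \<tau> y) = G n (perm_act \<sigma> x) (perm_act \<tau> y)"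
      by (rule Q_eq_G[OF onbP perm_simplex[OF s x] perm_simplex[OF t y]])
    also have "\<dots> = G n (perm_act (\<sigma> \<circ> inv \<tau>) x) y" unfolding G_perm[OF t] perm_comp ..
    finally show "okernel K P (perm_act \<sigma> x) (perm_act \<tau> y) = G n (perm_act (\<sigma> \<circ> inv \<tau>) x) y" .
  qed
  have dbl: "(\<Sum>\<sigma>\<in>Sym d. \<Sum>\<tau>\<in>Sym d. okernel K P (perm_act \<sigma> x) (perm_act \<tau> y)) = fact d * (\<Sum>\<sigma>\<in>Sym d. G n (perm_act \<sigma> x) y)"
  proof -
    have "(\<Sum>\<sigma>\<in>Sym d. \<Sum>\<tau>\<in>Sym d. okernel K P (perm_act \<sigma> x) (perm_act \<tau> y)) = (\<Sum>\<sigma>\<in>Sym d. \<Sum>\<tau>\<in>Sym d. G n (perm_act (\<sigma> \<circ> inv \<tau>) x) y)"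
      using inner by simp
    also have "\<dots> = (\<Sum>\<tau>\<in>Sym d. \<Sum>\<sigma>\<in>Sym d. G n (perm_act (\<sigma> \<circ> inv \<tau>) x) y)" by (rule sum.swap)
    also have "\<dots> = (\<Sum>\<tau>\<in>Sym d. \<Sum>\<sigma>\<in>Sym d. G n (perm_act \<sigma> x) y)"
      by (intro sum.cong refl sum_Sym_right[OF Sym_inv])
    also have "\<dots> = fact d * (\<Sum>\<sigma>\<in>Sym d. G n (perm_act \<sigma> x) y)" by (simp add: card_Sym)
    finally show ?thesis .
  qed
  have E3: "(1 / (fact d)^2) * (\<Sum>\<sigma>\<in>Sym d. \<Sum>\<tau>\<in>Sym d. okernel K P (perm_act \<sigma> x) (perm_act \<tau> y)) = R"
    unfolding dbl R_def using fd by (simp add: power2_eq_square)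
  have E4: "(\<Sum>m\<le>n. a_coef \<theta> n m * ((1 / fact d) * (\<Sum>\<sigma>\<in>Sym d. xi \<theta> d m (perm_act \<sigma> x) y))) = R"
    unfolding R_def G_def sum_distrib_left by (subst sum.swap) (simp add: mult_ac)
  have E1: "okernel L S x y = R"
  proof -
    define Rx where "Rx z = (1 / fact d) * (\<Sum>\<sigma>\<in>Sym d. G n (perm_act \<sigma> x) z)" for z
    have SV: "\<forall>k<L. S k \<in> Vsym d (symparam \<theta> d) n" and ob: "\<forall>j<L. \<forall>k<L. dir_inner d (symparam \<theta> d) (S j) (S k) = (if j = k then 1 else 0)"
      and span: "\<forall>f\<in>Vsym d (symparam \<theta> d) n. \<exists>c. \<forall>x\<in>dsimplex d. f x = (\<Sum>k<L. c k * S k x)"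
      using onbS by (auto simp: onb_def)
    have bS: "\<forall>k<L. Bnd d (S k)" using SV by (auto intro: Bnd_polys simp: Vsym_def)
    have RV: "Rx \<in> Vsym d (symparam \<theta> d) n"
      unfolding Vsym_def
    proof (intro CollectI conjI allI impI ballI)
      show "Rx \<in> polys d n" unfolding Rx_def[abs_def] by (intro polys_cmult polys_finsum finite_Sym G_polys)
      show "symmetric_fun d Rx" unfolding symmetric_fun_def
      proof (intro ballI)
        fix \<tau> z assume t: "\<tau> \<in> Sym d" and z: "z \<in> dsimplex d"
        show "Rx (perm_act \<tau> z) = Rx z"
          unfolding Rx_def G_perm[OF t] perm_comp using sum_Sym_right[OF Sym_inv[OF t], of "\<lambda>\<sigma>. G n (perm_act \<sigma> x) z"] by simp
      qed
      fix m g assume m: "m < n" and g: "g \<in> polys d m" and gs: "symmetric_fun d g"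
      have "dir_inner d (symparam \<theta> d) Rx g = (1 / fact d) * (\<Sum>\<sigma>\<in>Sym d. Aop n g (perm_act \<sigma> x))"
        unfolding dir_inner_def Rx_def by (rule E_Rlin[OF Bnd_polys[OF g]])
      also have "\<dots> = 0" using Aop_poly_low[OF g m perm_simplex[OF _ x]] by simp
      finally show "dir_inner d (symparam \<theta> d) Rx g = 0" .
    qed
    obtain c where c: "\<forall>z\<in>dsimplex d. Rx z = (\<Sum>k<L. c k * S k z)" using span RV by blast
    have "c k = S k x" if k: "k < L" for k
    proof -
      have Sk: "S k \<in> Vsym d (symparam \<theta> d) n" using SV k by simp
      have "c k = E (\<lambda>z. Rx z * S k z)" using onb_coef[OF ob bS c k] by simp
      also have "\<dots> = (1 / fact d) * (\<Sum>\<sigma>\<in>Sym d. Aop n (S k) (perm_act \<sigma> x))"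
        unfolding Rx_def by (rule E_Rlin) (use bS k in simp)
      also have "\<dots> = (1 / fact d) * (\<Sum>\<sigma>\<in>Sym d. S k x)"
      proof -
        have "\<And>\<sigma>. \<sigma> \<in> Sym d \<Longrightarrow> Aop n (S k) (perm_act \<sigma> x) = S k x"
        proof -
          fix \<sigma> assume s: "\<sigma> \<in> Sym d"
          have "Aop n (S k) (perm_act \<sigma> x) = S k (perm_act \<sigma> x)"
            by (rule Aop_fix[OF onbP S_in_V[OF Sk] perm_simplex[OF s x]])
          also have "\<dots> = S k x" using Sk s x by (auto simp: Vsym_def symmetric_fun_def)
          finally show "Aop n (S k) (perm_act \<sigma> x) = S k x" .
        qed
        then show ?thesis by simp
      qed
      also have "\<dots> = S k x" using fd by (simp add: card_Sym)
      finally show ?thesis .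
    qed
    then have "Rx y = okernel L S x y" using c y by (simp add: okernel_def)
    then show ?thesis unfolding Rx_def R_def by simp
  qed
  show ?thesis using E1 E2 E3 E4 by simp
qed

end

theorem proposition4p1:
  fixes d n K L :: nat and \<theta> :: real
    and P S :: "nat \<Rightarrow> (nat \<Rightarrow> real) \<Rightarrow> real"
    and x y :: "nat \<Rightarrow> real"
  assumes "2 \<le> d" and "0 < \<theta>"
    and "onb d (symparam \<theta> d) (Vspace d (symparam \<theta> d) n) K P"
    and "onb d (symparam \<theta> d) (Vsym d (symparam \<theta> d) n) L S"
    and "x \<in> dsimplex d" and "y \<in> dsimplex d"
  shows "okernel L S x y
           = (1 / fact d) * (\<Sum>\<sigma>\<in>Sym d. okernel K P (perm_act \<sigma> x) y)
       \<and> (1 / fact d) * (\<Sum>\<sigma>\<in>Sym d. okernel K P (perm_act \<sigma> x) y)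
           = (1 / (fact d)^2) * (\<Sum>\<sigma>\<in>Sym d. \<Sum>\<tau>\<in>Sym d. okernel K P (perm_act \<sigma> x) (perm_act \<tau> y))
       \<and> (1 / (fact d)^2) * (\<Sum>\<sigma>\<in>Sym d. \<Sum>\<tau>\<in>Sym d. okernel K P (perm_act \<sigma> x) (perm_act \<tau> y))
           = (\<Sum>m\<le>n. a_coef \<theta> n m * ((1 / fact d) * (\<Sum>\<sigma>\<in>Sym d. xi \<theta> d m (perm_act \<sigma> x) y)))"
  proof -
  interpret mset \<theta> d by unfold_locales (use assms(1,2) in auto)
  show ?thesis by (rule main_eqs[OF assms(3) assms(4) assms(5) assms(6)])
qed

end
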